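(* Let $\mathbb F(2,3;5)$ be the manifold of partial flags $X\subset Y\subset\mathbb C^5$ with $\dim X=2$, $\dim Y=3$. Set $a=K_2(4)$, $b=K_2(1)$, $c=K_2(-5)$, $A=K_3(0)$, $B=K_3(3)$, $C=K_3(-1)$. Then there are exactly four flags $X\subset Y$ in $\mathbb F(2,3;5)$ such that $X$ meets each of $a,B,C$ nontrivially, $\dim(Y\cap A)\ge2$, and $Y$ meets each of $b,c$ nontrivially; exactly two of these four flags are real and the other two are not real.
   Context: For $s\in\mathbb C$, $K_i(s)\subset\mathbb C^5$ denotes the row span of the first $i$ rows of the $5\times5$ matrix with $(i,j)$ entry $\binom{j-1}{i-1}s^{j-i}$ (zero for $j<i$); this is the $i$-dimensional subspace osculating the rational normal curve $\gamma(s)=(1,s,s^2,s^3,s^4)$ at $\gamma(s)$. "Meets nontrivially" means the intersection is not $\{0\}$. A flag is real if both subspaces are spanned by real vectors. *)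

theory Defs
  imports "HOL-Analysis.Analysis"
begin

text \<open>Row r (0-indexed, r < 5) of the 5x5 matrix with (i,j) entry
  binom(j-1,i-1) s^(j-i) (zero for j < i), with 1-indexed i = r+1, j = c+1.\<close>
definition osc_row :: "nat \<Rightarrow> complex \<Rightarrow> complex ^ 5" where
  "osc_row r s = vector (map (\<lambda>c. if r \<le> c then of_nat (c choose r) * s ^ (c - r) else 0) [0..<5])"

definition K :: "nat \<Rightarrow> complex \<Rightarrow> (complex ^ 5) set" where
  "K i s = vec.span {osc_row r s | r. r < i}"

definition meets :: "(complex ^ 5) set \<Rightarrow> (complex ^ 5) set \<Rightarrow> bool" where
  "meets U V \<longleftrightarrow> U \<inter> V \<noteq> {0}"

definition real_subspace :: "(complex ^ 5) set \<Rightarrow> bool" where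
  "real_subspace U \<longleftrightarrow> (\<exists>S. (\<forall>v\<in>S. \<forall>j. Im (v $ j) = 0) \<and> U = vec.span S)"

definition flag23 :: "(complex ^ 5) set \<Rightarrow> (complex ^ 5) set \<Rightarrow> bool" where
  "flag23 X Y \<longleftrightarrow> vec.subspace X \<and> vec.subspace Y \<and> X \<subseteq> Y \<and> vec.dim X = 2 \<and> vec.dim Y = 3"

end

theory Submission
  imports Defs
begin

abbreviation vec5 :: "complex \<Rightarrow> complex \<Rightarrow> complex \<Rightarrow> complex \<Rightarrow> complex \<Rightarrow> complex^5" where
  "vec5 a b c d e \<equiv> vector [a,b,c,d,e]"

lemma vector_5 [simp]:
  "(vector [x1,x2,x3,x4,x5] :: ('a::zero)^5) $ 1 = x1"
  "(vector [x1,x2,x3,x4,x5] :: ('a::zero)^5) $ 2 = x2"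
  "(vector [x1,x2,x3,x4,x5] :: ('a::zero)^5) $ 3 = x3"
  "(vector [x1,x2,x3,x4,x5] :: ('a::zero)^5) $ 4 = x4"
  "(vector [x1,x2,x3,x4,x5] :: ('a::zero)^5) $ 5 = x5"
  unfolding vector_def by simp_all

lemma exhaust_5:
  fixes x :: 5
  shows "x = 1 \<or> x = 2 \<or> x = 3 \<or> x = 4 \<or> x = 5"
proof (induct x)
  case (of_int z)
  then have "z = 0 \<or> z = 1 \<or> z = 2 \<or> z = 3 \<or> z = 4" by fastforce
  then show ?case by auto
qed

lemma vec5_eq_iff: "(x::'a^5) = y \<longleftrightarrow> x$1 = y$1 \<and> x$2 = y$2 \<and> x$3 = y$3 \<and> x$4 = y$4 \<and> x$5 = y$5"
proof
  assume "x$1 = y$1 \<and> x$2 = y$2 \<and> x$3 = y$3 \<and> x$4 = y$4 \<and> x$5 = y$5"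
  then have "x$i = y$i" for i using exhaust_5[of i] by auto
  then show "x = y" by (simp add: vec_eq_iff)
qed simp

lemma osc0: "osc_row 0 s = vec5 1 s (s^2) (s^3) (s^4)"
  by (simp add: osc_row_def upt_conv_Cons eval_nat_numeral power2_eq_square power3_eq_cube)
lemma osc1: "osc_row 1 s = vec5 0 1 (2 * s) (3 * s^2) (4 * s^3)"
  by (simp add: osc_row_def upt_conv_Cons eval_nat_numeral power2_eq_square power3_eq_cube)
lemma osc2: "osc_row 2 s = vec5 0 0 1 (3 * s) (6 * s^2)"
  by (simp add: osc_row_def upt_conv_Cons eval_nat_numeral power2_eq_square)

lemma span1: "x \<in> vec.span {p} \<longleftrightarrow> (\<exists>k1. x = k1 *s p)"
  by (simp add: vec.span_insert)
lemma span2: "x \<in> vec.span {p, q} \<longleftrightarrow> (\<exists>k1 k2. x = k1 *s p + k2 *s q)"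
proof -
  have "x \<in> vec.span {p,q} \<longleftrightarrow> (\<exists>k1 k2. x - k1 *s p - k2 *s q = 0)" by (simp add: vec.span_insert)
  also have "\<dots> \<longleftrightarrow> (\<exists>k1 k2. x = k1 *s p + k2 *s q)" by (simp add: diff_diff_eq)
  finally show ?thesis .
qed
lemma span3: "x \<in> vec.span {p, q, r} \<longleftrightarrow> (\<exists>k1 k2 k3. x = k1 *s p + k2 *s q + k3 *s r)"
proof -
  have "x \<in> vec.span {p,q,r} \<longleftrightarrow> (\<exists>k1 k2 k3. x - k1 *s p - k2 *s q - k3 *s r = 0)" by (simp add: vec.span_insert)
  also have "\<dots> \<longleftrightarrow> (\<exists>k1 k2 k3. x = k1 *s p + k2 *s q + k3 *s r)" by (simp add: diff_diff_eq add.assoc)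
  finally show ?thesis .
qed

lemma set2: "{f r | r. r < (2::nat)} = {f 0, f 1}"
proof -
  have "{f r | r. r < (2::nat)} = f ` {..<2}" by auto
  also have "{..<2::nat} = {0,1}" by (auto simp: numeral_2_eq_2 lessThan_Suc)
  finally show ?thesis by simp
qed
lemma set3: "{f r | r. r < (3::nat)} = {f 0, f 1, f 2}"
proof -
  have "{f r | r. r < (3::nat)} = f ` {..<3}" by auto
  also have "{..<3::nat} = {0,1,2}" by (auto simp: numeral_3_eq_3 lessThan_Suc)
  finally show ?thesis by simp
qed

definition R0 :: "complex \<Rightarrow> complex^5" where "R0 s = vec5 1 s (s^2) (s^3) (s^4)"
definition R1 :: "complex \<Rightarrow> complex^5" where "R1 s = vec5 0 1 (2 * s) (3 * s^2) (4 * s^3)"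
definition R2 :: "complex \<Rightarrow> complex^5" where "R2 s = vec5 0 0 1 (3 * s) (6 * s^2)"

lemma K2_eq: "K 2 s = vec.span {R0 s, R1 s}"
  unfolding K_def set2 R0_def R1_def osc0 osc1 ..
lemma K3_eq: "K 3 s = vec.span {R0 s, R1 s, R2 s}"
  unfolding K_def set3 R0_def R1_def R2_def osc0 osc1 osc2 ..

lemma K2_param: "v \<in> K 2 s \<longleftrightarrow> (\<exists>p q. v = p *s R0 s + q *s R1 s)"
  unfolding K2_eq span2 ..

definition f1 :: "complex \<Rightarrow> complex^5 \<Rightarrow> complex" where
  "f1 s v = - (s^3) * v$1 + 3 * s^2 * v$2 - 3 * s * v$3 + v$4"
definition f2 :: "complex \<Rightarrow> complex^5 \<Rightarrow> complex" where
  "f2 s v = - (s^3) * v$2 + 3 * s^2 * v$3 - 3 * s * v$4 + v$5"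

lemma cert1: "a - b = ca * ea \<Longrightarrow> ea = 0 \<Longrightarrow> (a::'a::comm_ring) = b"
  by simp
lemma cert2: "a - b = ca * ea + cb * eb \<Longrightarrow> ea = 0 \<Longrightarrow> eb = 0 \<Longrightarrow> (a::'a::comm_ring) = b"
  by simp
lemma cert3: "a - b = ca * ea + cb * eb + cc * ec \<Longrightarrow> ea = 0 \<Longrightarrow> eb = 0 \<Longrightarrow> ec = 0 \<Longrightarrow> (a::'a::comm_ring) = b"
  by simp

lemma K3_char: "v \<in> K 3 s \<longleftrightarrow> f1 s v = 0 \<and> f2 s v = 0"
proof
  assume "v \<in> K 3 s"
  then obtain p q r where e: "v = p *s R0 s + q *s R1 s + r *s R2 s"
    unfolding K3_eq span3 by blast
  have "f1 s v = 0" unfolding e f1_def R0_def R1_def R2_def by simp algebra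
  moreover have "f2 s v = 0" unfolding e f2_def R0_def R1_def R2_def by simp algebra
  ultimately show "f1 s v = 0 \<and> f2 s v = 0" ..
next
  assume h: "f1 s v = 0 \<and> f2 s v = 0"
  then have h1: "f1 s v = 0" and h2: "f2 s v = 0" by auto
  have c4: "v$4 = v$1 * s^3 + (v$2 - s * v$1) * (3 * s^2) + (v$3 - 2 * s * v$2 + s^2 * v$1) * (3 * s)"
    by (rule cert1[where ca = 1, OF _ h1]) (unfold f1_def, algebra)
  have c5: "v$5 = v$1 * s^4 + (v$2 - s * v$1) * (4 * s^3) + (v$3 - 2 * s * v$2 + s^2 * v$1) * (6 * s^2)"
    by (rule cert2[where ca = 1 and cb = "3 * s", OF _ h2 h1]) (unfold f1_def f2_def, algebra)
  have "v = (v$1) *s R0 s + (v$2 - s * v$1) *s R1 s + (v$3 - 2 * s * v$2 + s^2 * v$1) *s R2 s"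
    apply (simp only: vec5_eq_iff R0_def R1_def R2_def vector_5 vector_add_component vector_smult_component)
    apply (intro conjI)
    subgoal by algebra
    subgoal by algebra
    subgoal by algebra
    subgoal by (rule c4)
    subgoal by (rule c5)
    done
  then show "v \<in> K 3 s" unfolding K3_eq span3 by blast
qed

definition g0 :: "complex \<Rightarrow> complex^5 \<Rightarrow> complex" where
  "g0 s v = s^2 * v$1 - 2 * s * v$2 + v$3"
definition g1 :: "complex \<Rightarrow> complex^5 \<Rightarrow> complex" where
  "g1 s v = s^2 * v$2 - 2 * s * v$3 + v$4"
definition g2 :: "complex \<Rightarrow> complex^5 \<Rightarrow> complex" where
  "g2 s v = s^2 * v$3 - 2 * s * v$4 + v$5"

lemma K2_char: "v \<in> K 2 s \<longleftrightarrow> g0 s v = 0 \<and> g1 s v = 0 \<and> g2 s v = 0"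
proof
  assume "v \<in> K 2 s"
  then obtain p q where e: "v = p *s R0 s + q *s R1 s"
    unfolding K2_param by blast
  have "g0 s v = 0" unfolding e g0_def R0_def R1_def by simp algebra
  moreover have "g1 s v = 0" unfolding e g1_def R0_def R1_def by simp algebra
  moreover have "g2 s v = 0" unfolding e g2_def R0_def R1_def by simp algebra
  ultimately show "g0 s v = 0 \<and> g1 s v = 0 \<and> g2 s v = 0" by blast
next
  assume h: "g0 s v = 0 \<and> g1 s v = 0 \<and> g2 s v = 0"
  then have h0: "g0 s v = 0" and h1: "g1 s v = 0" and h2: "g2 s v = 0" by auto
  have c3: "v$3 = v$1 * s^2 + (v$2 - s * v$1) * (2 * s)"
    by (rule cert1[where ca = 1, OF _ h0]) (unfold g0_def, algebra)
  have c4: "v$4 = v$1 * s^3 + (v$2 - s * v$1) * (3 * s^2)"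
    by (rule cert2[where ca = 1 and cb = "2 * s", OF _ h1 h0]) (unfold g0_def g1_def, algebra)
  have c5: "v$5 = v$1 * s^4 + (v$2 - s * v$1) * (4 * s^3)"
    by (rule cert3[where ca = 1 and cb = "2 * s" and cc = "3 * s^2", OF _ h2 h1 h0]) (unfold g0_def g1_def g2_def, algebra)
  have "v = (v$1) *s R0 s + (v$2 - s * v$1) *s R1 s"
    apply (simp only: vec5_eq_iff R0_def R1_def vector_5 vector_add_component vector_smult_component)
    apply (intro conjI)
    subgoal by algebra
    subgoal by algebra
    subgoal by (rule c3)
    subgoal by (rule c4)
    subgoal by (rule c5)
    done
  then show "v \<in> K 2 s" unfolding K2_param by blast
qed

lemma meets_iff: "0 \<in> U \<Longrightarrow> 0 \<in> V \<Longrightarrow> meets U V \<longleftrightarrow> (\<exists>v. v \<in> U \<and> v \<in> V \<and> v \<noteq> 0)"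
  unfolding meets_def by blast

lemma zero_K: "0 \<in> K i s"
  unfolding K_def by (rule vec.span_zero)

definition li2 :: "complex^5 \<Rightarrow> complex^5 \<Rightarrow> bool" where
  "li2 x y \<longleftrightarrow> (\<forall>c d. c *s x + d *s y = 0 \<longrightarrow> c = 0 \<and> d = 0)"
definition li3 :: "complex^5 \<Rightarrow> complex^5 \<Rightarrow> complex^5 \<Rightarrow> bool" where
  "li3 x y z \<longleftrightarrow> (\<forall>c d e. c *s x + d *s y + e *s z = 0 \<longrightarrow> c = 0 \<and> d = 0 \<and> e = 0)"
definition li4 :: "complex^5 \<Rightarrow> complex^5 \<Rightarrow> complex^5 \<Rightarrow> complex^5 \<Rightarrow> bool" where
  "li4 x y z w \<longleftrightarrow> (\<forall>c d e f. c *s x + d *s y + e *s z + f *s w = 0 \<longrightarrow> c = 0 \<and> d = 0 \<and> e = 0 \<and> f = 0)"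

lemma ind_ins:
  assumes "x \<notin> S" "vec.independent S" "x \<notin> vec.span S"
  shows "vec.independent (insert x S)"
  using assms by (simp add: vec.independent_insert)

lemma indep2:
  assumes h: "li2 x y"
  shows "vec.independent {x, y} \<and> card {x, y} = 2"
proof -
  have xy: "x \<noteq> y"
  proof
    assume "x = y" then have "1 *s x + (-1) *s y = 0" by simp
    from h[unfolded li2_def, rule_format, OF this] show False by simp
  qed
  have y0: "y \<noteq> 0"
  proof
    assume "y = 0" then have "0 *s x + 1 *s y = 0" by simp
    from h[unfolded li2_def, rule_format, OF this] show False by simp
  qed
  have ny: "x \<notin> vec.span {y}"
  proof
    assume "x \<in> vec.span {y}"
    then obtain k where "x = k *s y" unfolding span1 by blast
    then have "1 *s x + (-k) *s y = 0" by simp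
    from h[unfolded li2_def, rule_format, OF this] show False by simp
  qed
  have "vec.independent {y}" using y0 by (simp add: vec.independent_insert)
  then have "vec.independent {x, y}" using ind_ins[of x "{y}"] xy ny by auto
  moreover have "card {x, y} = 2" using xy by simp
  ultimately show ?thesis ..
qed

lemma indep3:
  assumes h: "li3 x y z"
  shows "vec.independent {x, y, z} \<and> card {x, y, z} = 3"
proof -
  have "li2 y z" unfolding li2_def
  proof (intro allI impI)
    fix d e assume "d *s y + e *s z = 0"
    then have "0 *s x + d *s y + e *s z = 0" by simp
    from h[unfolded li3_def, rule_format, OF this] show "d = 0 \<and> e = 0" by simp
  qed
  note yz = indep2[OF this]
  have nx: "x \<notin> vec.span {y, z}"
  proof
    assume "x \<in> vec.span {y, z}"
    then obtain k1 k2 where "x = k1 *s y + k2 *s z" unfolding span2 by blast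
    then have "1 *s x + (-k1) *s y + (-k2) *s z = 0" by (simp add: vector_smult_lneg)
    from h[unfolded li3_def, rule_format, OF this] show False by simp
  qed
  have xn: "x \<notin> {y, z}" using nx vec.span_base[of x "{y,z}"] by (metis)
  have "vec.independent {x, y, z}" by (rule ind_ins[OF xn conjunct1[OF yz] nx])
  moreover have "card {x, y, z} = 3" using card_insert_disjoint[of "{y,z}" x] conjunct2[OF yz] xn by simp
  ultimately show ?thesis ..
qed

lemma indep4:
  assumes h: "li4 x y z w"
  shows "vec.independent {x, y, z, w} \<and> card {x, y, z, w} = 4"
proof -
  have "li3 y z w" unfolding li3_def
  proof (intro allI impI)
    fix d e f assume "d *s y + e *s z + f *s w = 0"
    then have "0 *s x + d *s y + e *s z + f *s w = 0" by simp
    from h[unfolded li4_def, rule_format, OF this] show "d = 0 \<and> e = 0 \<and> f = 0" by simp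
  qed
  note yz = indep3[OF this]
  have nx: "x \<notin> vec.span {y, z, w}"
  proof
    assume "x \<in> vec.span {y, z, w}"
    then obtain k1 k2 k3 where "x = k1 *s y + k2 *s z + k3 *s w" unfolding span3 by blast
    then have "1 *s x + (-k1) *s y + (-k2) *s z + (-k3) *s w = 0" by (simp add: vector_smult_lneg)
    from h[unfolded li4_def, rule_format, OF this] show False by simp
  qed
  have xn: "x \<notin> {y, z, w}" using nx vec.span_base[of x "{y,z,w}"] by (metis)
  have "vec.independent {x, y, z, w}" by (rule ind_ins[OF xn conjunct1[OF yz] nx])
  moreover have "card {x, y, z, w} = 4" using card_insert_disjoint[of "{y,z,w}" x] conjunct2[OF yz] xn by simp
  ultimately show ?thesis ..
qed


lemma dim_ge2:
  assumes "x \<in> V" "y \<in> V" "li2 x y"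
  shows "2 \<le> vec.dim V"
proof -
  have "card {x,y} \<le> vec.dim V" using indep2[OF assms(3)] assms(1,2)
    by (intro vec.independent_card_le_dim) auto
  then show ?thesis using indep2[OF assms(3)] by simp
qed

lemma dim_ge3:
  assumes "x \<in> V" "y \<in> V" "z \<in> V" "li3 x y z"
  shows "3 \<le> vec.dim V"
proof -
  have "card {x,y,z} \<le> vec.dim V" using indep3[OF assms(4)] assms(1-3)
    by (intro vec.independent_card_le_dim) auto
  then show ?thesis using indep3[OF assms(4)] by simp
qed

lemma dim_span2:
  assumes "li2 x y"
  shows "vec.dim (vec.span {x, y}) = 2"
  using indep2[OF assms] vec.dim_span_eq_card_independent by metis

lemma dim_span3:
  assumes "li3 x y z"
  shows "vec.dim (vec.span {x, y, z}) = 3"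
  using indep3[OF assms] vec.dim_span_eq_card_independent by metis

lemma span_eq3:
  assumes "vec.subspace V" "vec.dim V = 3" "x \<in> V" "y \<in> V" "z \<in> V" "li3 x y z"
  shows "V = vec.span {x, y, z}"
proof
  show "V \<subseteq> vec.span {x, y, z}"
    using indep3[OF assms(6)] assms(2-5) by (intro vec.card_ge_dim_independent) auto
  show "vec.span {x, y, z} \<subseteq> V"
    using assms(1,3-5) by (intro vec.span_minimal) auto
qed

lemma span_eq2:
  assumes "vec.subspace V" "vec.dim V = 2" "x \<in> V" "y \<in> V" "li2 x y"
  shows "V = vec.span {x, y}"
proof
  show "V \<subseteq> vec.span {x, y}"
    using indep2[OF assms(5)] assms(2-4) by (intro vec.card_ge_dim_independent) auto
  show "vec.span {x, y} \<subseteq> V"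
    using assms(1,3-4) by (intro vec.span_minimal) auto
qed

lemma dep_in_dim2:
  fixes x y z :: "complex^5"
  assumes "vec.dim V = 2" "x \<in> V" "y \<in> V" "z \<in> V"
  shows "\<exists>c d e. c *s x + d *s y + e *s z = 0 \<and> (c \<noteq> 0 \<or> d \<noteq> 0 \<or> e \<noteq> 0)"
proof (rule ccontr)
  assume "\<not> ?thesis"
  then have "li3 x y z" unfolding li3_def by blast
  then have "3 \<le> vec.dim V" using dim_ge3 assms(2-4) by blast
  then show False using assms(1) by simp
qed

lemma dim_ge4:
  assumes "x \<in> V" "y \<in> V" "z \<in> V" "w \<in> V" "li4 x y z w"
  shows "4 \<le> vec.dim V"
proof -
  have "card {x,y,z,w} \<le> vec.dim V" using indep4[OF assms(5)] assms(1-4)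
    by (intro vec.independent_card_le_dim) auto
  then show ?thesis using indep4[OF assms(5)] by simp
qed


lemma two_elems: "2 \<le> card B \<Longrightarrow> \<exists>w1 w2. w1 \<in> B \<and> w2 \<in> B \<and> w1 \<noteq> w2"
proof -
  assume c: "2 \<le> card B"
  then have "B \<noteq> {}" by auto
  then obtain w1 where w1: "w1 \<in> B" by blast
  have fin: "finite B" proof (rule ccontr) assume "infinite B" then show False using c by simp qed
  have "card (B - {w1}) \<ge> 1" using c w1 fin by (simp add: card_Diff_singleton)
  then have "B - {w1} \<noteq> {}" by (metis card.empty not_one_le_zero)
  then obtain w2 where "w2 \<in> B - {w1}" by blast
  then have "w2 \<in> B" "w2 \<noteq> w1" by auto
  then show ?thesis using w1 by blast
qed


lemma two_indep_of_dim:
  assumes "2 \<le> vec.dim W"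
  shows "\<exists>w1 w2. w1 \<in> W \<and> w2 \<in> W \<and> li2 w1 w2"
proof -
  obtain B where B: "B \<subseteq> W" "vec.independent B" "card B = vec.dim W"
    using vec.basis_exists[of W] by metis
  then have "2 \<le> card B" using assms by simp
  then obtain w1 w2 where w: "w1 \<in> B" "w2 \<in> B" "w1 \<noteq> w2" using two_elems by blast
  have ind: "vec.independent {w1, w2}" using B(2) w vec.independent_mono[of B "{w1,w2}"] by auto
  have n1: "w1 \<notin> vec.span {w2}" using ind w(3) vec.independent_insert[of w1 "{w2}"] by auto
  have n2: "w2 \<noteq> 0" using ind vec.dependent_zero[of "{w1,w2}"] by auto
  have "li2 w1 w2" unfolding li2_def
  proof (intro allI impI)
    fix c d assume e: "c *s w1 + d *s w2 = 0"
    show "c = 0 \<and> d = 0"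
    proof (cases "c = 0")
      case True
      then have "d *s w2 = 0" using e by simp
      then show ?thesis using True n2 by simp
    next
      case False
      have "w1 = (1/c) *s (c *s w1)" using False by (simp add: vector_smult_assoc)
      also have "c *s w1 = (- d) *s w2" using e
        by (metis add.commute add_diff_cancel diff_0 vector_smult_lneg)
      finally have "w1 = (- d / c) *s w2" by (simp add: vector_smult_assoc)
      then have "w1 \<in> vec.span {w2}" unfolding span1 by blast
      then show ?thesis using n1 by blast
    qed
  qed
  then show ?thesis using w B(1) by blast
qed

lemma prop2:
  fixes p q c d :: complex
  assumes "p * d - q * c = 0" "c \<noteq> 0 \<or> d \<noteq> 0"
  shows "\<exists>l. p = l * c \<and> q = l * d"
proof (cases "c = 0")
  case False
  have "q = (p / c) * d"
  proof -
    have "q * c = p * d" using assms(1) by simp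
    then show ?thesis using False by (simp add: field_simps)
  qed
  moreover have "p = (p / c) * c" using False by simp
  ultimately show ?thesis by blast
next
  case True
  then have d: "d \<noteq> 0" using assms(2) by simp
  have "p = (q / d) * c"
  proof -
    have "p * d = q * c" using assms(1) by simp
    then show ?thesis using d by (simp add: field_simps)
  qed
  moreover have "q = (q / d) * d" using d by simp
  ultimately show ?thesis by blast
qed

lemma prop3:
  fixes x1 x2 x3 r1 r2 r3 s1 s2 s3 :: complex
  assumes hr: "x1 * r1 + x2 * r2 + x3 * r3 = 0" and hs: "x1 * s1 + x2 * s2 + x3 * s3 = 0"
    and nz: "r2 * s3 - r3 * s2 \<noteq> 0 \<or> r3 * s1 - r1 * s3 \<noteq> 0 \<or> r1 * s2 - r2 * s1 \<noteq> 0"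
  shows "\<exists>l. x1 = l * (r2 * s3 - r3 * s2) \<and> x2 = l * (r3 * s1 - r1 * s3) \<and> x3 = l * (r1 * s2 - r2 * s1)"
proof -
  define n1 where "n1 = r2 * s3 - r3 * s2"
  define n2 where "n2 = r3 * s1 - r1 * s3"
  define n3 where "n3 = r1 * s2 - r2 * s1"
  have c12: "x1 * n2 - x2 * n1 = r3 * (x1 * s1 + x2 * s2 + x3 * s3) - s3 * (x1 * r1 + x2 * r2 + x3 * r3)"
    unfolding n1_def n2_def by algebra
  have c13: "x1 * n3 - x3 * n1 = - r2 * (x1 * s1 + x2 * s2 + x3 * s3) + s2 * (x1 * r1 + x2 * r2 + x3 * r3)"
    unfolding n1_def n3_def by algebra
  have c23: "x2 * n3 - x3 * n2 = r1 * (x1 * s1 + x2 * s2 + x3 * s3) - s1 * (x1 * r1 + x2 * r2 + x3 * r3)"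
    unfolding n2_def n3_def by algebra
  have e12: "x1 * n2 = x2 * n1" using c12 hr hs by simp
  have e13: "x1 * n3 = x3 * n1" using c13 hr hs by simp
  have e23: "x2 * n3 = x3 * n2" using c23 hr hs by simp
  have nz': "n1 \<noteq> 0 \<or> n2 \<noteq> 0 \<or> n3 \<noteq> 0" using nz unfolding n1_def n2_def n3_def .
  have "\<exists>l. x1 = l * n1 \<and> x2 = l * n2 \<and> x3 = l * n3"
  proof (cases "n1 \<noteq> 0")
    case True
    then show ?thesis using e12 e13
      by (intro exI[of _ "x1 / n1"]) (auto simp: field_simps)
  next
    case f1: False
    show ?thesis
    proof (cases "n2 \<noteq> 0")
      case True
      then show ?thesis using e12 e23
        by (intro exI[of _ "x2 / n2"]) (auto simp: field_simps)
    next
      case False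
      then have "n3 \<noteq> 0" using nz' f1 by simp
      then show ?thesis using e13 e23
        by (intro exI[of _ "x3 / n3"]) (auto simp: field_simps)
    qed
  qed
  then show ?thesis unfolding n1_def n2_def n3_def .
qed

definition det3 :: "complex \<Rightarrow> complex \<Rightarrow> complex \<Rightarrow> complex \<Rightarrow> complex \<Rightarrow> complex \<Rightarrow> complex \<Rightarrow> complex \<Rightarrow> complex \<Rightarrow> complex" where
  "det3 x1 y1 z1 x2 y2 z2 x3 y3 z3 = x1 * (y2 * z3 - z2 * y3) - y1 * (x2 * z3 - z2 * x3) + z1 * (x2 * y3 - y2 * x3)"

lemma cramer3:
  fixes c d e x1 y1 z1 x2 y2 z2 x3 y3 z3 :: complex
  assumes "c * x1 + d * y1 + e * z1 = 0" "c * x2 + d * y2 + e * z2 = 0" "c * x3 + d * y3 + e * z3 = 0"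
  shows "c * det3 x1 y1 z1 x2 y2 z2 x3 y3 z3 = 0 \<and> d * det3 x1 y1 z1 x2 y2 z2 x3 y3 z3 = 0 \<and> e * det3 x1 y1 z1 x2 y2 z2 x3 y3 z3 = 0"
proof -
  have "c * det3 x1 y1 z1 x2 y2 z2 x3 y3 z3 = (y2 * z3 - z2 * y3) * (c * x1 + d * y1 + e * z1) - (y1 * z3 - z1 * y3) * (c * x2 + d * y2 + e * z2) + (y1 * z2 - z1 * y2) * (c * x3 + d * y3 + e * z3)"
    unfolding det3_def by algebra
  moreover have "d * det3 x1 y1 z1 x2 y2 z2 x3 y3 z3 = - (x2 * z3 - z2 * x3) * (c * x1 + d * y1 + e * z1) + (x1 * z3 - z1 * x3) * (c * x2 + d * y2 + e * z2) - (x1 * z2 - z1 * x2) * (c * x3 + d * y3 + e * z3)"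
    unfolding det3_def by algebra
  moreover have "e * det3 x1 y1 z1 x2 y2 z2 x3 y3 z3 = (x2 * y3 - y2 * x3) * (c * x1 + d * y1 + e * z1) - (x1 * y3 - y1 * x3) * (c * x2 + d * y2 + e * z2) + (x1 * y2 - y1 * x2) * (c * x3 + d * y3 + e * z3)"
    unfolding det3_def by algebra
  ultimately show ?thesis using assms by simp
qed

lemma hyp_span:
  assumes "\<And>v. v \<in> S \<Longrightarrow> a * v$5 = b * v$4" "x \<in> vec.span S"
  shows "a * x$5 = b * (x$4 :: complex)"
proof -
  have "vec.subspace {v. a * v$5 = b * v$4}"
    by (rule vec.subspaceI) (auto simp: algebra_simps)
  then show ?thesis using vec.span_induct[OF assms(2), of "\<lambda>v. a * v$5 = b * v$4"] assms(1) by blast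
qed

definition vcnj :: "complex^5 \<Rightarrow> complex^5" where "vcnj v = (\<chi> j. cnj (v$j))"

lemma vcnj_nth[simp]: "vcnj v $ j = cnj (v $ j)" unfolding vcnj_def by simp

lemma cnj_span:
  assumes "\<forall>v\<in>S. \<forall>j. Im (v $ j) = 0" "x \<in> vec.span S"
  shows "vcnj x \<in> vec.span S"
proof -
  have "vec.subspace {v. vcnj v \<in> vec.span S}"
  proof (rule vec.subspaceI)
    show "0 \<in> {v. vcnj v \<in> vec.span S}" 
      by (simp add: vcnj_def vec.span_zero flip: zero_vec_def) 
    fix x y assume "x \<in> {v. vcnj v \<in> vec.span S}" "y \<in> {v. vcnj v \<in> vec.span S}"
    moreover have "vcnj (x + y) = vcnj x + vcnj y" by (simp add: vec_eq_iff)
    ultimately show "x + y \<in> {v. vcnj v \<in> vec.span S}" by (simp add: vec.span_add)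
  next
    fix c x assume "x \<in> {v. vcnj v \<in> vec.span S}"
    moreover have "vcnj (c *s x) = cnj c *s vcnj x" by (simp add: vec_eq_iff)
    ultimately show "c *s x \<in> {v. vcnj v \<in> vec.span S}" by (simp add: vec.span_scale)
  qed
  moreover have "vcnj v \<in> vec.span S" if "v \<in> S" for v
  proof -
    have "vcnj v = v" using assms(1) that by (simp add: vec_eq_iff complex_eq_iff)
    then show ?thesis using that vec.span_base by metis
  qed
  ultimately show ?thesis using vec.span_induct[OF assms(2), of "\<lambda>v. vcnj v \<in> vec.span S"] by blast
qed


lemma comp_eq: "(x::complex^5) = y \<Longrightarrow> x $ i = y $ i" by simp

lemma li3_of_minor:
  fixes x y z :: "complex^5"
  assumes "det3 (x$i) (y$i) (z$i) (x$j) (y$j) (z$j) (x$k) (y$k) (z$k) \<noteq> 0"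
  shows "li3 x y z"
  unfolding li3_def
proof (intro allI impI)
  fix c d e assume eq: "c *s x + d *s y + e *s z = 0"
  have "c * x$i + d * y$i + e * z$i = 0" using comp_eq[OF eq, of i] by simp
  moreover have "c * x$j + d * y$j + e * z$j = 0" using comp_eq[OF eq, of j] by simp
  moreover have "c * x$k + d * y$k + e * z$k = 0" using comp_eq[OF eq, of k] by simp
  ultimately have "c * det3 (x$i) (y$i) (z$i) (x$j) (y$j) (z$j) (x$k) (y$k) (z$k) = 0 \<and> d * det3 (x$i) (y$i) (z$i) (x$j) (y$j) (z$j) (x$k) (y$k) (z$k) = 0 \<and> e * det3 (x$i) (y$i) (z$i) (x$j) (y$j) (z$j) (x$k) (y$k) (z$k) = 0"
    by (rule cramer3)
  then show "c = 0 \<and> d = 0 \<and> e = 0" using assms by simp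
qed

lemma dep_minor:
  fixes x y z :: "complex^5"
  assumes eq: "c *s x + d *s y + e *s z = 0" and nz: "c \<noteq> 0 \<or> d \<noteq> 0 \<or> e \<noteq> 0"
  shows "det3 (x$i) (y$i) (z$i) (x$j) (y$j) (z$j) (x$k) (y$k) (z$k) = 0"
proof -
  have "c * x$i + d * y$i + e * z$i = 0" using comp_eq[OF eq, of i] by simp
  moreover have "c * x$j + d * y$j + e * z$j = 0" using comp_eq[OF eq, of j] by simp
  moreover have "c * x$k + d * y$k + e * z$k = 0" using comp_eq[OF eq, of k] by simp
  ultimately have "c * det3 (x$i) (y$i) (z$i) (x$j) (y$j) (z$j) (x$k) (y$k) (z$k) = 0 \<and> d * det3 (x$i) (y$i) (z$i) (x$j) (y$j) (z$j) (x$k) (y$k) (z$k) = 0 \<and> e * det3 (x$i) (y$i) (z$i) (x$j) (y$j) (z$j) (x$k) (y$k) (z$k) = 0"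
    by (rule cramer3)
  then show ?thesis using nz by auto
qed

lemma li2_of_minor:
  fixes x y :: "complex^5"
  assumes "x$i * y$j - x$j * y$i \<noteq> 0"
  shows "li2 x y"
  unfolding li2_def
proof (intro allI impI)
  fix c d assume eq: "c *s x + d *s y = 0"
  have hi: "c * x$i + d * y$i = 0" using comp_eq[OF eq, of i] by simp
  have hj: "c * x$j + d * y$j = 0" using comp_eq[OF eq, of j] by simp
  have "c * (x$i * y$j - x$j * y$i) = y$j * (c * x$i + d * y$i) - y$i * (c * x$j + d * y$j)" by algebra
  then have "c * (x$i * y$j - x$j * y$i) = 0" using hi hj by simp
  moreover have "d * (x$i * y$j - x$j * y$i) = x$i * (c * x$j + d * y$j) - x$j * (c * x$i + d * y$i)" by algebra
  then have "d * (x$i * y$j - x$j * y$i) = 0" using hi hj by simp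
  ultimately show "c = 0 \<and> d = 0" using assms by simp
qed

definition bv :: "complex \<Rightarrow> complex \<Rightarrow> complex^5" where "bv a b = (4 * a - 3 * b) *s R0 1 + (b - a) *s R1 1"
definition cv :: "complex \<Rightarrow> complex \<Rightarrow> complex^5" where "cv a b = (20 * a + 3 * b) *s R0 (-5) + (25 * a + 5 * b) *s R1 (-5)"
definition uv :: "complex \<Rightarrow> complex \<Rightarrow> complex^5" where "uv a b = (16 * a - 3 * b) *s R0 4 + (4 * b - 16 * a) *s R1 4"
definition nV1 :: "complex \<Rightarrow> complex \<Rightarrow> complex" where "nV1 a b = (11520 * a^2 - 2352 * a * b - 240 * b^2)"
definition nV2 :: "complex \<Rightarrow> complex \<Rightarrow> complex" where "nV2 a b = (- 48 * a^2 + 53 * a * b - 11 * b^2)"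
definition nV3 :: "complex \<Rightarrow> complex \<Rightarrow> complex" where "nV3 a b = (- 7680 * a^2 + 5888 * a * b + 256 * b^2)"
definition nW1 :: "complex \<Rightarrow> complex \<Rightarrow> complex" where "nW1 a b = (24000 * a^2 + 11100 * a * b - 900 * b^2)"
definition nW2 :: "complex \<Rightarrow> complex \<Rightarrow> complex" where "nW2 a b = (- 400 * a^2 + 175 * a * b + 75 * b^2)"
definition nW3 :: "complex \<Rightarrow> complex \<Rightarrow> complex" where "nW3 a b = (- 640 * a^2 + 64 * a * b + 192 * b^2)"
definition Vv :: "complex \<Rightarrow> complex \<Rightarrow> complex^5" where "Vv a b = nV1 a b *s bv a b + nV2 a b *s cv a b + nV3 a b *s uv a b"
definition Wv :: "complex \<Rightarrow> complex \<Rightarrow> complex^5" where "Wv a b = nW1 a b *s bv a b + nW2 a b *s cv a b + nW3 a b *s uv a b"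
lemma bv_c:
  "bv a b $ 1 = (4 * a - 3 * b)"
  "bv a b $ 2 = (3 * a - 2 * b)"
  "bv a b $ 3 = (2 * a - 1 * b)"
  "bv a b $ 4 = (1 * a)"
  "bv a b $ 5 = (1 * b)"
  by (simp add: bv_def R0_def R1_def; algebra)+

lemma cv_c:
  "cv a b $ 1 = (20 * a + 3 * b)"
  "cv a b $ 2 = (- 75 * a - 10 * b)"
  "cv a b $ 3 = (250 * a + 25 * b)"
  "cv a b $ 4 = (- 625 * a)"
  "cv a b $ 5 = (- 625 * b)"
  by (simp add: cv_def R0_def R1_def; algebra)+

lemma uv_c:
  "uv a b $ 1 = (16 * a - 3 * b)"
  "uv a b $ 2 = (48 * a - 8 * b)"
  "uv a b $ 3 = (128 * a - 16 * b)"
  "uv a b $ 4 = (256 * a)"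
  "uv a b $ 5 = (256 * b)"
  by (simp add: uv_def R0_def R1_def; algebra)+

lemma Vv_c:
  "Vv a b $ 1 = (- 77760 * a^3 + 74196 * a^2 * b - 7533 * a * b^2 - 81 * b^3)"
  "Vv a b $ 2 = (- 330480 * a^3 + 310473 * a^2 * b - 30537 * a * b^2 - 1458 * b^3)"
  "Vv a b $ 3 = (- 972000 * a^3 + 872370 * a^2 * b - 60993 * a * b^2 - 4131 * b^3)"
  "Vv a b $ 4 = (- 1924560 * a^3 + 1471851 * a^2 * b + 72171 * a * b^2)"
  "Vv a b $ 5 = (- 1924560 * a^2 * b + 1471851 * a * b^2 + 72171 * b^3)"
  by (simp add: Vv_def nV1_def nV2_def nV3_def bv_c cv_c uv_c vector_add_component vector_smult_component; algebra)+

lemma Wv_c: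
  "Wv a b $ 1 = (77760 * a^3 - 22356 * a^2 * b - 31995 * a * b^2 + 2349 * b^3)"
  "Wv a b $ 2 = (71280 * a^3 - 15633 * a^2 * b - 23571 * a * b^2 - 486 * b^3)"
  "Wv a b $ 3 = (- 133920 * a^3 + 50382 * a^2 * b + 33777 * a * b^2 - 297 * b^3)"
  "Wv a b $ 4 = (110160 * a^3 - 81891 * a^2 * b + 1377 * a * b^2)"
  "Wv a b $ 5 = (110160 * a^2 * b - 81891 * a * b^2 + 1377 * b^3)"
  by (simp add: Wv_def nW1_def nW2_def nW3_def bv_c cv_c uv_c vector_add_component vector_smult_component; algebra)+

lemma BZ_nV: "nV1 a b = 0 \<Longrightarrow> nV2 a b = 0 \<Longrightarrow> nV3 a b = 0 \<Longrightarrow> a = 0 \<and> b = 0"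
proof -
  assume h0: "nV1 a b = 0" and h1: "nV2 a b = 0" and h2: "nV3 a b = 0"
  have "(911 * a - 737 * b) * nV1 a b + (215184 * a + 16080 * b) * nV2 a b = 165888 * a^3"
    by (simp only: nV1_def nV2_def nV3_def; algebra)
  then have ha: "a = 0" using h0 h1 h2 by simp
  have "(144 * a - 119 * b) * nV1 a b + (34560 * a + 2544 * b) * nV2 a b = 576 * b^3"
    by (simp only: nV1_def nV2_def nV3_def; algebra)
  then have hb: "b = 0" using h0 h1 h2 by simp
  show ?thesis using ha hb by simp
qed

lemma BZ_nW: "nW1 a b = 0 \<Longrightarrow> nW2 a b = 0 \<Longrightarrow> nW3 a b = 0 \<Longrightarrow> a = 0 \<and> b = 0"
proof -
  assume h0: "nW1 a b = 0" and h1: "nW2 a b = 0" and h2: "nW3 a b = 0"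
  have "(29 * a + 33 * b) * nW1 a b + (- 5460 * a + 396 * b) * nW2 a b = 2880000 * a^3"
    by (simp only: nW1_def nW2_def nW3_def; algebra)
  then have ha: "a = 0" using h0 h1 h2 by simp
  have "(48 * a - 29 * b) * nW1 a b + (2880 * a + 852 * b) * nW2 a b = 90000 * b^3"
    by (simp only: nW1_def nW2_def nW3_def; algebra)
  then have hb: "b = 0" using h0 h1 h2 by simp
  show ?thesis using ha hb by simp
qed

lemma f1_lin: "f1 s (x *s p + y *s q + z *s r) = x * f1 s p + y * f1 s q + z * f1 s r"
  by (simp add: f1_def; algebra)
lemma f2_lin: "f2 s (x *s p + y *s q + z *s r) = x * f2 s p + y * f2 s q + z * f2 s r"
  by (simp add: f2_def; algebra)

lemma mB234: "det3 (bv a b $ 2) (cv a b $ 2) (uv a b $ 2) (bv a b $ 3) (cv a b $ 3) (uv a b $ 3) (bv a b $ 4) (cv a b $ 4) (uv a b $ 4) = (388800 * a^3 - 272160 * a^2 * b)"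
  by (simp only: det3_def bv_c cv_c uv_c; algebra)

lemma mB125: "det3 (bv a b $ 1) (cv a b $ 1) (uv a b $ 1) (bv a b $ 2) (cv a b $ 2) (uv a b $ 2) (bv a b $ 5) (cv a b $ 5) (uv a b $ 5) = (- 29160 * a * b^2 + 20412 * b^3)"
  by (simp only: det3_def bv_c cv_c uv_c; algebra)

lemma mB123: "det3 (bv a b $ 1) (cv a b $ 1) (uv a b $ 1) (bv a b $ 2) (cv a b $ 2) (uv a b $ 2) (bv a b $ 3) (cv a b $ 3) (uv a b $ 3) = (- 77760 * a^3 + 61236 * a^2 * b - 972 * b^3)"
  by (simp only: det3_def bv_c cv_c uv_c; algebra)

lemma BZ_B: fixes a b :: complex shows "(388800 * a^3 - 272160 * a^2 * b) = 0 \<Longrightarrow> (- 29160 * a * b^2 + 20412 * b^3) = 0 \<Longrightarrow> (- 77760 * a^3 + 61236 * a^2 * b - 972 * b^3) = 0 \<Longrightarrow> a = 0 \<and> b = 0"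
proof -
  assume h0: "(388800 * a^3 - 272160 * a^2 * b) = 0" and h1: "(- 29160 * a * b^2 + 20412 * b^3) = 0" and h2: "(- 77760 * a^3 + 61236 * a^2 * b - 972 * b^3) = 0"
  have Ea: "(2987 * a^2 - 70 * a * b - 49 * b^2) * (388800 * a^3 - 272160 * a^2 * b) + (13720 * a^2) * (- 77760 * a^3 + 61236 * a^2 * b - 972 * b^3) = 94478400 * a^5"
    by algebra
  have "94478400 * a^5 = 0" by (subst Ea[symmetric]) (simp only: h0 h1 h2 mult_zero_right add_0_right add_0)
  then have ha: "a = 0" by simp
  have Eb: "(- 800 * a^2 + 70 * a * b + 49 * b^2) * (- 29160 * a * b^2 + 20412 * b^3) + (300 * b^2) * (- 77760 * a^3 + 61236 * a^2 * b - 972 * b^3) = 708588 * b^5"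
    by algebra
  have "708588 * b^5 = 0" by (subst Eb[symmetric]) (simp only: h0 h1 h2 mult_zero_right add_0_right add_0)
  then have hb: "b = 0" by simp
  show ?thesis using ha hb by simp
qed

lemma li3_B: "a \<noteq> 0 \<or> b \<noteq> 0 \<Longrightarrow> li3 (bv a b) (cv a b) (uv a b)"
proof -
  assume ab: "a \<noteq> 0 \<or> b \<noteq> 0"
  have "\<not> ((388800 * a^3 - 272160 * a^2 * b) = 0 \<and> (- 29160 * a * b^2 + 20412 * b^3) = 0 \<and> (- 77760 * a^3 + 61236 * a^2 * b - 972 * b^3) = 0)" using BZ_B ab by blast
  then show ?thesis
    using li3_of_minor[where x="bv a b" and y="cv a b" and z="uv a b" and i=2 and j=3 and k=4, unfolded mB234] li3_of_minor[where x="bv a b" and y="cv a b" and z="uv a b" and i=1 and j=2 and k=5, unfolded mB125] li3_of_minor[where x="bv a b" and y="cv a b" and z="uv a b" and i=1 and j=2 and k=3, unfolded mB123]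
    by blast
qed

lemma crossV1: "f1 3 (cv a b) * f2 3 (uv a b) - f1 3 (uv a b) * f2 3 (cv a b) = 108 * nV1 a b"
  by (simp add: f1_def f2_def bv_c cv_c uv_c nV1_def; algebra)
lemma crossV2: "f1 3 (uv a b) * f2 3 (bv a b) - f1 3 (bv a b) * f2 3 (uv a b) = 108 * nV2 a b"
  by (simp add: f1_def f2_def bv_c cv_c uv_c nV2_def; algebra)
lemma crossV3: "f1 3 (bv a b) * f2 3 (cv a b) - f1 3 (cv a b) * f2 3 (bv a b) = 108 * nV3 a b"
  by (simp add: f1_def f2_def bv_c cv_c uv_c nV3_def; algebra)

lemma crossW1: "f1 (-1) (cv a b) * f2 (-1) (uv a b) - f1 (-1) (uv a b) * f2 (-1) (cv a b) = 36 * nW1 a b"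
  by (simp add: f1_def f2_def bv_c cv_c uv_c nW1_def; algebra)
lemma crossW2: "f1 (-1) (uv a b) * f2 (-1) (bv a b) - f1 (-1) (bv a b) * f2 (-1) (uv a b) = 36 * nW2 a b"
  by (simp add: f1_def f2_def bv_c cv_c uv_c nW2_def; algebra)
lemma crossW3: "f1 (-1) (bv a b) * f2 (-1) (cv a b) - f1 (-1) (cv a b) * f2 (-1) (bv a b) = 36 * nW3 a b"
  by (simp add: f1_def f2_def bv_c cv_c uv_c nW3_def; algebra)

lemma mQ134: "det3 (uv a b $ 1) (Vv a b $ 1) (Wv a b $ 1) (uv a b $ 3) (Vv a b $ 3) (Wv a b $ 3) (uv a b $ 4) (Vv a b $ 4) (Wv a b $ 4) = (- 1881169920000 * a^7 + 2688505344000 * a^6 * b - 885703507200 * a^5 * b^2 - 82442026800 * a^4 * b^3 + 7404307200 * a^3 * b^4 + 11486998800 * a^2 * b^5 - 271188000 * a * b^6)"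
  by (simp only: det3_def uv_c Vv_c Wv_c; algebra)

lemma mQ234: "det3 (uv a b $ 2) (Vv a b $ 2) (Wv a b $ 2) (uv a b $ 3) (Vv a b $ 3) (Wv a b $ 3) (uv a b $ 4) (Vv a b $ 4) (Wv a b $ 4) = (- 1343692800000 * a^7 + 1802787840000 * a^6 * b - 533208096000 * a^5 * b^2 - 68129424000 * a^4 * b^3 + 2379456000 * a^3 * b^4 + 7593264000 * a^2 * b^5)"
  by (simp only: det3_def uv_c Vv_c Wv_c; algebra)

lemma mQ123: "det3 (uv a b $ 1) (Vv a b $ 1) (Wv a b $ 1) (uv a b $ 2) (Vv a b $ 2) (Wv a b $ 2) (uv a b $ 3) (Vv a b $ 3) (Wv a b $ 3) = (268738560000 * a^7 - 384072192000 * a^6 * b + 121730169600 * a^5 * b^2 + 18215960400 * a^4 * b^3 - 2962072800 * a^3 * b^4 - 1884319200 * a^2 * b^5 + 47239200 * a * b^6 + 27118800 * b^7)"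
  by (simp only: det3_def uv_c Vv_c Wv_c; algebra)

definition Qh :: "complex \<Rightarrow> complex \<Rightarrow> complex" where "Qh a b = (3840 * a^4 - 2464 * a^3 * b - 201 * a^2 * b^2 + 54 * a * b^3 + 31 * b^4)"
definition Qt :: "complex \<Rightarrow> complex" where "Qt t = (3840 - 2464 * t - 201 * t^2 + 54 * t^3 + 31 * t^4)"

lemma BZ_Q: fixes a b :: complex shows "(- 1881169920000 * a^7 + 2688505344000 * a^6 * b - 885703507200 * a^5 * b^2 - 82442026800 * a^4 * b^3 + 7404307200 * a^3 * b^4 + 11486998800 * a^2 * b^5 - 271188000 * a * b^6) = 0 \<Longrightarrow> (- 1343692800000 * a^7 + 1802787840000 * a^6 * b - 533208096000 * a^5 * b^2 - 68129424000 * a^4 * b^3 + 2379456000 * a^3 * b^4 + 7593264000 * a^2 * b^5) = 0 \<Longrightarrow> (268738560000 * a^7 - 384072192000 * a^6 * b + 121730169600 * a^5 * b^2 + 18215960400 * a^4 * b^3 - 2962072800 * a^3 * b^4 - 1884319200 * a^2 * b^5 + 47239200 * a * b^6 + 27118800 * b^7) = 0 \<Longrightarrow> a \<noteq> 0 \<or> b \<noteq> 0 \<Longrightarrow> a \<noteq> 0 \<and> Qh a b = 0"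
proof -
  assume h0: "(- 1881169920000 * a^7 + 2688505344000 * a^6 * b - 885703507200 * a^5 * b^2 - 82442026800 * a^4 * b^3 + 7404307200 * a^3 * b^4 + 11486998800 * a^2 * b^5 - 271188000 * a * b^6) = 0" and h1: "(- 1343692800000 * a^7 + 1802787840000 * a^6 * b - 533208096000 * a^5 * b^2 - 68129424000 * a^4 * b^3 + 2379456000 * a^3 * b^4 + 7593264000 * a^2 * b^5) = 0" and h2: "(268738560000 * a^7 - 384072192000 * a^6 * b + 121730169600 * a^5 * b^2 + 18215960400 * a^4 * b^3 - 2962072800 * a^3 * b^4 - 1884319200 * a^2 * b^5 + 47239200 * a * b^6 + 27118800 * b^7) = 0" and ab: "a \<noteq> 0 \<or> b \<noteq> 0"
  have a0: "a \<noteq> 0"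
  proof
    assume a: "a = 0"
    have "(268738560000 * a^7 - 384072192000 * a^6 * b + 121730169600 * a^5 * b^2 + 18215960400 * a^4 * b^3 - 2962072800 * a^3 * b^4 - 1884319200 * a^2 * b^5 + 47239200 * a * b^6 + 27118800 * b^7) = 27118800 * b^7" using a by simp
    then have "27118800 * b^7 = 0" using h2 by simp
    then have "b = 0" by simp
    then show False using a ab by simp
  qed
  have E: "(1960 * a) * (- 1881169920000 * a^7 + 2688505344000 * a^6 * b - 885703507200 * a^5 * b^2 - 82442026800 * a^4 * b^3 + 7404307200 * a^3 * b^4 + 11486998800 * a^2 * b^5 - 271188000 * a * b^6) + (- 2987 * a + 70 * b) * (- 1343692800000 * a^7 + 1802787840000 * a^6 * b - 533208096000 * a^5 * b^2 - 68129424000 * a^4 * b^3 + 2379456000 * a^3 * b^4 + 7593264000 * a^2 * b^5) = 85030560000 * a^4 * Qh a b"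
    unfolding Qh_def by algebra
  have "85030560000 * a^4 * Qh a b = 0" by (subst E[symmetric]) (simp only: h0 h1 mult_zero_right add_0_right add_0)
  then have "Qh a b = 0" using a0 by simp
  then show ?thesis using a0 by simp
qed

lemma Qh_Qt: "a \<noteq> 0 \<Longrightarrow> Qh a b = 0 \<Longrightarrow> Qt (b / a) = 0"
proof -
  assume a: "a \<noteq> 0" and q: "Qh a b = 0"
  have "Qh a b = a^4 * Qt (b / a)" unfolding Qh_def Qt_def using a by (simp add: field_simps power2_eq_square power3_eq_cube power4_eq_xxxx)
  then show ?thesis using a q by simp
qed

lemma mul_cancel0: "(c::complex) * z = 0 \<Longrightarrow> c \<noteq> 0 \<Longrightarrow> z = 0" by simp
lemma diff0: "(x::complex) - y = 0 \<Longrightarrow> x = y" by simp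

lemma li2_uV: "li2 (uv 1 t) (Vv 1 t)"
proof -
  have E: "(153673296 - 267480690 * t + 27880350 * t^2) * (uv 1 t $ 2 * Vv 1 t $ 4 - uv 1 t $ 4 * Vv 1 t $ 2) + (527507130 - 364289909 * t - 58548735 * t^2) * (uv 1 t $ 3 * Vv 1 t $ 4 - uv 1 t $ 4 * Vv 1 t $ 3) - 117642992025600 = 0"
    by (simp only: uv_c Vv_c power_one mult_1_left mult_1_right; algebra)
  then have "(uv 1 t $ 2 * Vv 1 t $ 4 - uv 1 t $ 4 * Vv 1 t $ 2) \<noteq> 0 \<or> (uv 1 t $ 3 * Vv 1 t $ 4 - uv 1 t $ 4 * Vv 1 t $ 3) \<noteq> 0" by auto
  then show ?thesis using li2_of_minor[where x="uv 1 t" and y="Vv 1 t" and i=2 and j=4] li2_of_minor[where x="uv 1 t" and y="Vv 1 t" and i=3 and j=4] by blast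
qed

definition alW :: "complex \<Rightarrow> complex" where "alW t = (30068858880 - 10891749888 * t - 4634993664 * t^2 - 867801600 * t^3) / 4608"
definition beW :: "complex \<Rightarrow> complex" where "beW t = (- 1783600 + 656925 * t + 276450 * t^2 + 51925 * t^3) / 4608"

lemma W_span: "Qt t = 0 \<Longrightarrow> Wv 1 t = alW t *s uv 1 t + beW t *s Vv 1 t"
proof -
  assume q: "Qt t = 0"
  have A: "4608 * alW t = (30068858880 - 10891749888 * t - 4634993664 * t^2 - 867801600 * t^3)" unfolding alW_def by simp
  have B: "4608 * beW t = (- 1783600 + 656925 * t + 276450 * t^2 + 51925 * t^3)" unfolding beW_def by simp
  have E1: "4608 * Wv 1 t $ 1 - ((30068858880 - 10891749888 * t - 4634993664 * t^2 - 867801600 * t^3) * uv 1 t $ 1 + (- 1783600 + 656925 * t + 276450 * t^2 + 51925 * t^3) * Vv 1 t $ 1) = (- 161311500 + 13103775 * t + 135675 * t^2) * Qt t"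
    unfolding Qt_def by (simp only: uv_c Vv_c Wv_c power_one mult_1_left mult_1_right; algebra)
  have C1: "Wv 1 t $ 1 = alW t * uv 1 t $ 1 + beW t * Vv 1 t $ 1"
  proof -
    have "4608 * (Wv 1 t $ 1 - (alW t * uv 1 t $ 1 + beW t * Vv 1 t $ 1)) = 4608 * Wv 1 t $ 1 - ((4608 * alW t) * uv 1 t $ 1 + (4608 * beW t) * Vv 1 t $ 1)" by algebra
    also have "... = (- 161311500 + 13103775 * t + 135675 * t^2) * Qt t" unfolding A B by (rule E1)
    finally have "4608 * (Wv 1 t $ 1 - (alW t * uv 1 t $ 1 + beW t * Vv 1 t $ 1)) = 0" using q by simp
    then have "Wv 1 t $ 1 - (alW t * uv 1 t $ 1 + beW t * Vv 1 t $ 1) = 0" by (rule mul_cancel0) simp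
    then show ?thesis by (rule diff0)
  qed
  have E2: "4608 * Wv 1 t $ 2 - ((30068858880 - 10891749888 * t - 4634993664 * t^2 - 867801600 * t^3) * uv 1 t $ 2 + (- 1783600 + 656925 * t + 276450 * t^2 + 51925 * t^3) * Vv 1 t $ 2) = (- 529276275 + 59897475 * t + 2442150 * t^2) * Qt t"
    unfolding Qt_def by (simp only: uv_c Vv_c Wv_c power_one mult_1_left mult_1_right; algebra)
  have C2: "Wv 1 t $ 2 = alW t * uv 1 t $ 2 + beW t * Vv 1 t $ 2"
  proof -
    have "4608 * (Wv 1 t $ 2 - (alW t * uv 1 t $ 2 + beW t * Vv 1 t $ 2)) = 4608 * Wv 1 t $ 2 - ((4608 * alW t) * uv 1 t $ 2 + (4608 * beW t) * Vv 1 t $ 2)" by algebra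
    also have "... = (- 529276275 + 59897475 * t + 2442150 * t^2) * Qt t" unfolding A B by (rule E2)
    finally have "4608 * (Wv 1 t $ 2 - (alW t * uv 1 t $ 2 + beW t * Vv 1 t $ 2)) = 0" using q by simp
    then have "Wv 1 t $ 2 - (alW t * uv 1 t $ 2 + beW t * Vv 1 t $ 2) = 0" by (rule mul_cancel0) simp
    then show ?thesis by (rule diff0)
  qed
  have E3: "4608 * Wv 1 t $ 3 - ((30068858880 - 10891749888 * t - 4634993664 * t^2 - 867801600 * t^3) * uv 1 t $ 3 + (- 1783600 + 656925 * t + 276450 * t^2 + 51925 * t^3) * Vv 1 t $ 3) = (- 1453929750 + 126949275 * t + 6919425 * t^2) * Qt t"
    unfolding Qt_def by (simp only: uv_c Vv_c Wv_c power_one mult_1_left mult_1_right; algebra)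
  have C3: "Wv 1 t $ 3 = alW t * uv 1 t $ 3 + beW t * Vv 1 t $ 3"
  proof -
    have "4608 * (Wv 1 t $ 3 - (alW t * uv 1 t $ 3 + beW t * Vv 1 t $ 3)) = 4608 * Wv 1 t $ 3 - ((4608 * alW t) * uv 1 t $ 3 + (4608 * beW t) * Vv 1 t $ 3)" by algebra
    also have "... = (- 1453929750 + 126949275 * t + 6919425 * t^2) * Qt t" unfolding A B by (rule E3)
    finally have "4608 * (Wv 1 t $ 3 - (alW t * uv 1 t $ 3 + beW t * Vv 1 t $ 3)) = 0" using q by simp
    then have "Wv 1 t $ 3 - (alW t * uv 1 t $ 3 + beW t * Vv 1 t $ 3) = 0" by (rule mul_cancel0) simp
    then show ?thesis by (rule diff0)
  qed
  have E4: "4608 * Wv 1 t $ 4 - ((30068858880 - 10891749888 * t - 4634993664 * t^2 - 867801600 * t^3) * uv 1 t $ 4 + (- 1783600 + 656925 * t + 276450 * t^2 + 51925 * t^3) * Vv 1 t $ 4) = (- 2898376425 - 120886425 * t) * Qt t"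
    unfolding Qt_def by (simp only: uv_c Vv_c Wv_c power_one mult_1_left mult_1_right; algebra)
  have C4: "Wv 1 t $ 4 = alW t * uv 1 t $ 4 + beW t * Vv 1 t $ 4"
  proof -
    have "4608 * (Wv 1 t $ 4 - (alW t * uv 1 t $ 4 + beW t * Vv 1 t $ 4)) = 4608 * Wv 1 t $ 4 - ((4608 * alW t) * uv 1 t $ 4 + (4608 * beW t) * Vv 1 t $ 4)" by algebra
    also have "... = (- 2898376425 - 120886425 * t) * Qt t" unfolding A B by (rule E4)
    finally have "4608 * (Wv 1 t $ 4 - (alW t * uv 1 t $ 4 + beW t * Vv 1 t $ 4)) = 0" using q by simp
    then have "Wv 1 t $ 4 - (alW t * uv 1 t $ 4 + beW t * Vv 1 t $ 4) = 0" by (rule mul_cancel0) simp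
    then show ?thesis by (rule diff0)
  qed
  have E5: "4608 * Wv 1 t $ 5 - ((30068858880 - 10891749888 * t - 4634993664 * t^2 - 867801600 * t^3) * uv 1 t $ 5 + (- 1783600 + 656925 * t + 276450 * t^2 + 51925 * t^3) * Vv 1 t $ 5) = (- 2898376425 * t - 120886425 * t^2) * Qt t"
    unfolding Qt_def by (simp only: uv_c Vv_c Wv_c power_one mult_1_left mult_1_right; algebra)
  have C5: "Wv 1 t $ 5 = alW t * uv 1 t $ 5 + beW t * Vv 1 t $ 5"
  proof -
    have "4608 * (Wv 1 t $ 5 - (alW t * uv 1 t $ 5 + beW t * Vv 1 t $ 5)) = 4608 * Wv 1 t $ 5 - ((4608 * alW t) * uv 1 t $ 5 + (4608 * beW t) * Vv 1 t $ 5)" by algebra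
    also have "... = (- 2898376425 * t - 120886425 * t^2) * Qt t" unfolding A B by (rule E5)
    finally have "4608 * (Wv 1 t $ 5 - (alW t * uv 1 t $ 5 + beW t * Vv 1 t $ 5)) = 0" using q by simp
    then have "Wv 1 t $ 5 - (alW t * uv 1 t $ 5 + beW t * Vv 1 t $ 5) = 0" by (rule mul_cancel0) simp
    then show ?thesis by (rule diff0)
  qed
  show ?thesis unfolding vec5_eq_iff using C1 C2 C3 C4 C5 by simp
qed

lemma vec5_eqI: "(x::'a^5)$1 = y$1 \<Longrightarrow> x$2 = y$2 \<Longrightarrow> x$3 = y$3 \<Longrightarrow> x$4 = y$4 \<Longrightarrow> x$5 = y$5 \<Longrightarrow> x = y"
  unfolding vec5_eq_iff by blast

lemma bv_hom: "bv a (a * t) = a *s bv 1 t"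
  by (rule vec5_eqI; simp only: bv_c vector_smult_component power_one mult_1_left mult_1_right; algebra)
lemma cv_hom: "cv a (a * t) = a *s cv 1 t"
  by (rule vec5_eqI; simp only: cv_c vector_smult_component power_one mult_1_left mult_1_right; algebra)
lemma uv_hom: "uv a (a * t) = a *s uv 1 t"
  by (rule vec5_eqI; simp only: uv_c vector_smult_component power_one mult_1_left mult_1_right; algebra)
lemma Vv_hom: "Vv a (a * t) = a^3 *s Vv 1 t"
  by (rule vec5_eqI; simp only: Vv_c vector_smult_component power_one mult_1_left mult_1_right; algebra)

lemma bv_K: "bv a b \<in> K 2 1" unfolding K2_param bv_def by blast
lemma cv_K: "cv a b \<in> K 2 (-5)" unfolding K2_param cv_def by blast
lemma uv_K: "uv a b \<in> K 2 4" unfolding K2_param uv_def by blast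
lemma Vv_K: "Vv a b \<in> K 3 3"
proof -
  have "f1 3 (Vv a b) = 0" by (simp add: f1_def Vv_c; algebra)
  moreover have "f2 3 (Vv a b) = 0" by (simp add: f2_def Vv_c; algebra)
  ultimately show ?thesis unfolding K3_char by blast
qed
lemma Wv_K: "Wv a b \<in> K 3 (-1)"
proof -
  have "f1 (-1) (Wv a b) = 0" by (simp add: f1_def Wv_c; algebra)
  moreover have "f2 (-1) (Wv a b) = 0" by (simp add: f2_def Wv_c; algebra)
  ultimately show ?thesis unfolding K3_char by blast
qed

lemma scale_back: "l \<noteq> 0 \<Longrightarrow> v = l *s w \<Longrightarrow> w = (1 / l) *s (v :: complex^5)"
  by (simp add: vector_smult_assoc)

lemma in_sub_scale: "vec.subspace S \<Longrightarrow> l \<noteq> 0 \<Longrightarrow> l *s w \<in> S \<Longrightarrow> (w :: complex^5) \<in> S"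
proof -
  assume "vec.subspace S" "l \<noteq> 0" "l *s w \<in> S"
  then have "(1 / l) *s (l *s w) \<in> S" using vec.subspace_scale by blast
  then show ?thesis using \<open>l \<noteq> 0\<close> by (simp add: vector_smult_assoc)
qed

lemma K30: "w \<in> K 3 0 \<Longrightarrow> w $ 4 = 0 \<and> w $ 5 = 0"
  unfolding K3_char f1_def f2_def by simp

lemma forward:
  assumes fl: "flag23 X Y" and mX1: "meets X (K 2 4)" and mX2: "meets X (K 3 3)" and mX3: "meets X (K 3 (-1))"
    and dA: "vec.dim (Y \<inter> K 3 0) \<ge> 2" and mY1: "meets Y (K 2 1)" and mY2: "meets Y (K 2 (-5))"
  shows "\<exists>t. Qt t = 0 \<and> X = vec.span {uv 1 t, Vv 1 t} \<and> Y = vec.span {bv 1 t, cv 1 t, uv 1 t}"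
proof -
  have sX: "vec.subspace X" and sY: "vec.subspace Y" and XY: "X \<subseteq> Y" and dX: "vec.dim X = 2" and dY: "vec.dim Y = 3"
    using fl unfolding flag23_def by auto
  have X0: "0 \<in> X" using sX vec.subspace_0 by blast
  have Y0: "0 \<in> Y" using sY vec.subspace_0 by blast
  obtain bt0 where b1: "bt0 \<in> Y" and b2: "bt0 \<in> K 2 1" and b3: "bt0 \<noteq> 0"
    using mY1 meets_iff[OF Y0 zero_K] by blast
  obtain p q where bpq: "bt0 = p *s R0 1 + q *s R1 1" using b2 unfolding K2_param by blast
  define a where "a = p + 3 * q"
  define b where "b = p + 4 * q"
  have beq: "bt0 = bv a b"
    unfolding bpq a_def b_def by (rule vec5_eqI; simp add: bv_c R0_def R1_def; algebra)
  have ab: "a \<noteq> 0 \<or> b \<noteq> 0"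
  proof (rule ccontr)
    assume "\<not> (a \<noteq> 0 \<or> b \<noteq> 0)"
    then have "a = 0" "b = 0" by auto
    then have "bt0 = 0" unfolding beq by (intro vec5_eqI) (simp_all add: bv_c)
    then show False using b3 by simp
  qed
  have bY: "bv a b \<in> Y" using b1 beq by simp
  obtain w1 w2 where w1: "w1 \<in> Y \<inter> K 3 0" and w2: "w2 \<in> Y \<inter> K 3 0" and wli: "li2 w1 w2"
    using two_indep_of_dim[OF dA] by blast
  have w1z: "w1 $ 4 = 0 \<and> w1 $ 5 = 0" using w1 K30 by blast
  have w2z: "w2 $ 4 = 0 \<and> w2 $ 5 = 0" using w2 K30 by blast
  have H: "a * v $ 5 = b * v $ 4" if vY: "v \<in> Y" for v
  proof (rule ccontr)
    assume nh: "a * v $ 5 \<noteq> b * v $ 4"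
    have "li4 w1 w2 (bv a b) v" unfolding li4_def
    proof (intro allI impI)
      fix c d e f assume eq: "c *s w1 + d *s w2 + e *s bv a b + f *s v = 0"
      have e4: "e * a + f * v $ 4 = 0" using comp_eq[OF eq, of 4] w1z w2z by (simp add: bv_c)
      have e5: "e * b + f * v $ 5 = 0" using comp_eq[OF eq, of 5] w1z w2z by (simp add: bv_c)
      have "e * (a * v $ 5 - b * v $ 4) = v $ 5 * (e * a + f * v $ 4) - v $ 4 * (e * b + f * v $ 5)" by algebra
      then have "e * (a * v $ 5 - b * v $ 4) = 0" using e4 e5 by simp
      then have ez: "e = 0" using nh by simp
      have "f * (a * v $ 5 - b * v $ 4) = a * (e * b + f * v $ 5) - b * (e * a + f * v $ 4)" by algebra
      then have "f * (a * v $ 5 - b * v $ 4) = 0" using e4 e5 by simp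
      then have fz: "f = 0" using nh by simp
      have "c *s w1 + d *s w2 = 0" using eq ez fz by simp
      then have "c = 0 \<and> d = 0" using wli unfolding li2_def by blast
      then show "c = 0 \<and> d = 0 \<and> e = 0 \<and> f = 0" using ez fz by simp
    qed
    then have "4 \<le> vec.dim Y" using dim_ge4[of w1 Y w2 "bv a b" v] w1 w2 bY vY by blast
    then show False using dY by simp
  qed
  obtain ch where c1: "ch \<in> Y" and c2: "ch \<in> K 2 (-5)" and c3: "ch \<noteq> 0"
    using mY2 meets_iff[OF Y0 zero_K] by blast
  obtain p1 q1 where cpq: "ch = p1 *s R0 (-5) + q1 *s R1 (-5)" using c2 unfolding K2_param by blast
  have "a * ch $ 5 = b * ch $ 4" using H c1 by blast
  then have "a * (625 * p1 - 500 * q1) = b * (- 125 * p1 + 75 * q1)" unfolding cpq by (simp add: R0_def R1_def algebra_simps)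
  then have "p1 * (25 * a + 5 * b) - q1 * (20 * a + 3 * b) = 0" by algebra
  moreover have "20 * a + 3 * b \<noteq> 0 \<or> 25 * a + 5 * b \<noteq> 0"
  proof (rule ccontr)
    assume "\<not> (20 * a + 3 * b \<noteq> 0 \<or> 25 * a + 5 * b \<noteq> 0)"
    then have "20 * a + 3 * b = 0" "25 * a + 5 * b = 0" by auto
    then have "a = 0" "b = 0" by algebra+
    then show False using ab by simp
  qed
  ultimately obtain l1 where l1: "p1 = l1 * (20 * a + 3 * b)" "q1 = l1 * (25 * a + 5 * b)"
    using prop2 by blast
  have "ch = l1 *s cv a b" unfolding cpq l1 cv_def by (rule vec5_eqI; simp add: R0_def R1_def; algebra)
  then have l1nz: "l1 \<noteq> 0" using c3 by auto
  have cY: "cv a b \<in> Y" using in_sub_scale[OF sY l1nz] c1 \<open>ch = l1 *s cv a b\<close> by simp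
  obtain um where u1: "um \<in> X" and u2: "um \<in> K 2 4" and u3: "um \<noteq> 0"
    using mX1 meets_iff[OF X0 zero_K] by blast
  obtain p2 q2 where upq: "um = p2 *s R0 4 + q2 *s R1 4" using u2 unfolding K2_param by blast
  have "a * um $ 5 = b * um $ 4" using H u1 XY by blast
  then have "a * (256 * p2 + 256 * q2) = b * (64 * p2 + 48 * q2)" unfolding upq by (simp add: R0_def R1_def algebra_simps)
  then have "p2 * (4 * b - 16 * a) - q2 * (16 * a - 3 * b) = 0" by algebra
  moreover have "16 * a - 3 * b \<noteq> 0 \<or> 4 * b - 16 * a \<noteq> 0"
  proof (rule ccontr)
    assume "\<not> (16 * a - 3 * b \<noteq> 0 \<or> 4 * b - 16 * a \<noteq> 0)"
    then have "16 * a - 3 * b = 0" "4 * b - 16 * a = 0" by auto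
    then have "a = 0" "b = 0" by algebra+
    then show False using ab by simp
  qed
  ultimately obtain l2 where l2: "p2 = l2 * (16 * a - 3 * b)" "q2 = l2 * (4 * b - 16 * a)"
    using prop2 by blast
  have "um = l2 *s uv a b" unfolding upq l2 uv_def by (rule vec5_eqI; simp add: R0_def R1_def; algebra)
  then have l2nz: "l2 \<noteq> 0" using u3 by auto
  have uX: "uv a b \<in> X" using in_sub_scale[OF sX l2nz] u1 \<open>um = l2 *s uv a b\<close> by simp
  have uY: "uv a b \<in> Y" using uX XY by blast
  have li3B: "li3 (bv a b) (cv a b) (uv a b)" using li3_B ab by blast
  have Yspan: "Y = vec.span {bv a b, cv a b, uv a b}" using span_eq3[OF sY dY bY cY uY li3B] .
  obtain v1 where v1: "v1 \<in> X" and v2: "v1 \<in> K 3 3" and v3: "v1 \<noteq> 0"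
    using mX2 meets_iff[OF X0 zero_K] by blast
  have "v1 \<in> vec.span {bv a b, cv a b, uv a b}" using v1 XY Yspan by blast
  then obtain x y z where vxyz: "v1 = x *s bv a b + y *s cv a b + z *s uv a b" unfolding span3 by blast
  have "f1 3 v1 = 0" "f2 3 v1 = 0" using v2 unfolding K3_char by auto
  then have hr: "x * f1 3 (bv a b) + y * f1 3 (cv a b) + z * f1 3 (uv a b) = 0"
    and hs: "x * f2 3 (bv a b) + y * f2 3 (cv a b) + z * f2 3 (uv a b) = 0"
    unfolding vxyz f1_lin f2_lin by auto
  have nzV: "f1 3 (cv a b) * f2 3 (uv a b) - f1 3 (uv a b) * f2 3 (cv a b) \<noteq> 0 \<or> f1 3 (uv a b) * f2 3 (bv a b) - f1 3 (bv a b) * f2 3 (uv a b) \<noteq> 0 \<or> f1 3 (bv a b) * f2 3 (cv a b) - f1 3 (cv a b) * f2 3 (bv a b) \<noteq> 0"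
    unfolding crossV1 crossV2 crossV3
  proof (rule ccontr)
    assume "\<not> (108 * nV1 a b \<noteq> 0 \<or> 108 * nV2 a b \<noteq> 0 \<or> 108 * nV3 a b \<noteq> 0)"
    then have "nV1 a b = 0" "nV2 a b = 0" "nV3 a b = 0" by auto
    then have "a = 0 \<and> b = 0" by (rule BZ_nV)
    then show False using ab by simp
  qed
  obtain l3 where l3: "x = l3 * (108 * nV1 a b)" "y = l3 * (108 * nV2 a b)" "z = l3 * (108 * nV3 a b)"
    using prop3[OF hr hs nzV] unfolding crossV1 crossV2 crossV3 by blast
  have "v1 = (108 * l3) *s Vv a b" unfolding vxyz l3 Vv_def
    by (rule vec5_eqI; simp only: vector_add_component vector_smult_component; algebra)
  then have l3nz: "108 * l3 \<noteq> 0" using v3 by auto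
  have VX: "Vv a b \<in> X" using in_sub_scale[OF sX l3nz] v1 \<open>v1 = (108 * l3) *s Vv a b\<close> by simp
  obtain v4 where v4: "v4 \<in> X" and v5: "v4 \<in> K 3 (-1)" and v6: "v4 \<noteq> 0"
    using mX3 meets_iff[OF X0 zero_K] by blast
  have "v4 \<in> vec.span {bv a b, cv a b, uv a b}" using v4 XY Yspan by blast
  then obtain x' y' z' where wxyz: "v4 = x' *s bv a b + y' *s cv a b + z' *s uv a b" unfolding span3 by blast
  have "f1 (-1) v4 = 0" "f2 (-1) v4 = 0" using v5 unfolding K3_char by auto
  then have hr': "x' * f1 (-1) (bv a b) + y' * f1 (-1) (cv a b) + z' * f1 (-1) (uv a b) = 0"
    and hs': "x' * f2 (-1) (bv a b) + y' * f2 (-1) (cv a b) + z' * f2 (-1) (uv a b) = 0"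
    unfolding wxyz f1_lin f2_lin by auto
  have nzW: "f1 (-1) (cv a b) * f2 (-1) (uv a b) - f1 (-1) (uv a b) * f2 (-1) (cv a b) \<noteq> 0 \<or> f1 (-1) (uv a b) * f2 (-1) (bv a b) - f1 (-1) (bv a b) * f2 (-1) (uv a b) \<noteq> 0 \<or> f1 (-1) (bv a b) * f2 (-1) (cv a b) - f1 (-1) (cv a b) * f2 (-1) (bv a b) \<noteq> 0"
    unfolding crossW1 crossW2 crossW3
  proof (rule ccontr)
    assume "\<not> (36 * nW1 a b \<noteq> 0 \<or> 36 * nW2 a b \<noteq> 0 \<or> 36 * nW3 a b \<noteq> 0)"
    then have "nW1 a b = 0" "nW2 a b = 0" "nW3 a b = 0" by auto
    then have "a = 0 \<and> b = 0" by (rule BZ_nW)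
    then show False using ab by simp
  qed
  obtain l4 where l4: "x' = l4 * (36 * nW1 a b)" "y' = l4 * (36 * nW2 a b)" "z' = l4 * (36 * nW3 a b)"
    using prop3[OF hr' hs' nzW] unfolding crossW1 crossW2 crossW3 by blast
  have "v4 = (36 * l4) *s Wv a b" unfolding wxyz l4 Wv_def
    by (rule vec5_eqI; simp only: vector_add_component vector_smult_component; algebra)
  then have l4nz: "36 * l4 \<noteq> 0" using v6 by auto
  have WX: "Wv a b \<in> X" using in_sub_scale[OF sX l4nz] v4 \<open>v4 = (36 * l4) *s Wv a b\<close> by simp
  obtain c d e where dep: "c *s uv a b + d *s Vv a b + e *s Wv a b = 0" and cde: "c \<noteq> 0 \<or> d \<noteq> 0 \<or> e \<noteq> 0"
    using dep_in_dim2[OF dX uX VX WX] by blast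
  have q1: "det3 (uv a b $ 1) (Vv a b $ 1) (Wv a b $ 1) (uv a b $ 3) (Vv a b $ 3) (Wv a b $ 3) (uv a b $ 4) (Vv a b $ 4) (Wv a b $ 4) = 0"
    by (rule dep_minor[OF dep cde])
  have q2: "det3 (uv a b $ 2) (Vv a b $ 2) (Wv a b $ 2) (uv a b $ 3) (Vv a b $ 3) (Wv a b $ 3) (uv a b $ 4) (Vv a b $ 4) (Wv a b $ 4) = 0"
    by (rule dep_minor[OF dep cde])
  have q3: "det3 (uv a b $ 1) (Vv a b $ 1) (Wv a b $ 1) (uv a b $ 2) (Vv a b $ 2) (Wv a b $ 2) (uv a b $ 3) (Vv a b $ 3) (Wv a b $ 3) = 0"
    by (rule dep_minor[OF dep cde])
  have aQ: "a \<noteq> 0 \<and> Qh a b = 0" using BZ_Q[OF q1[unfolded mQ134] q2[unfolded mQ234] q3[unfolded mQ123] ab] .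
  then have a0: "a \<noteq> 0" by simp
  define t where "t = b / a"
  have bat: "b = a * t" unfolding t_def using a0 by simp
  have Qt0: "Qt t = 0" unfolding t_def using Qh_Qt aQ by blast
  have uX1: "uv 1 t \<in> X" using in_sub_scale[OF sX a0] uX uv_hom[of a t] bat by simp
  have a3: "a^3 \<noteq> 0" using a0 by simp
  have VX1: "Vv 1 t \<in> X" using in_sub_scale[OF sX a3] VX Vv_hom[of a t] bat by simp
  have Xeq: "X = vec.span {uv 1 t, Vv 1 t}" using span_eq2[OF sX dX uX1 VX1 li2_uV] .
  have bY1: "bv 1 t \<in> Y" using in_sub_scale[OF sY a0] bY bv_hom[of a t] bat by simp
  have cY1: "cv 1 t \<in> Y" using in_sub_scale[OF sY a0] cY cv_hom[of a t] bat by simp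
  have uY1: "uv 1 t \<in> Y" using uX1 XY by blast
  have "li3 (bv 1 t) (cv 1 t) (uv 1 t)" using li3_B[of 1 t] by simp
  then have Yeq: "Y = vec.span {bv 1 t, cv 1 t, uv 1 t}" using span_eq3[OF sY dY bY1 cY1 uY1] by blast
  show ?thesis using Qt0 Xeq Yeq by blast
qed

definition Xf :: "complex \<Rightarrow> (complex^5) set" where "Xf t = vec.span {uv 1 t, Vv 1 t}"
definition Yf :: "complex \<Rightarrow> (complex^5) set" where "Yf t = vec.span {bv 1 t, cv 1 t, uv 1 t}"

lemma li3_B1: "li3 (bv 1 t) (cv 1 t) (uv 1 t)" using li3_B[of 1 t] by simp

lemma hyp_Y: "v \<in> Yf t \<Longrightarrow> v $ 5 = t * v $ 4"
proof -
  assume v: "v \<in> Yf t"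
  have "\<And>w. w \<in> {bv 1 t, cv 1 t, uv 1 t} \<Longrightarrow> 1 * w $ 5 = t * w $ 4"
    by (auto simp: bv_c cv_c uv_c)
  then have "1 * v $ 5 = t * v $ 4" using hyp_span v unfolding Yf_def by blast
  then show ?thesis by simp
qed

lemma converse:
  assumes q: "Qt t = 0"
  shows "flag23 (Xf t) (Yf t) \<and> meets (Xf t) (K 2 4) \<and> meets (Xf t) (K 3 3) \<and> meets (Xf t) (K 3 (-1))
      \<and> vec.dim (Yf t \<inter> K 3 0) \<ge> 2 \<and> meets (Yf t) (K 2 1) \<and> meets (Yf t) (K 2 (-5))"
proof -
  have bY: "bv 1 t \<in> Yf t" and cY: "cv 1 t \<in> Yf t" and uY: "uv 1 t \<in> Yf t"
    unfolding Yf_def by (auto intro: vec.span_base)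
  have uX: "uv 1 t \<in> Xf t" and VX: "Vv 1 t \<in> Xf t" unfolding Xf_def by (auto intro: vec.span_base)
  have VY: "Vv 1 t \<in> Yf t" unfolding Yf_def span3 Vv_def by blast
  have XY: "Xf t \<subseteq> Yf t" unfolding Xf_def using uY VY
    by (intro vec.span_minimal) (auto simp: Yf_def)
  have fl: "flag23 (Xf t) (Yf t)"
    unfolding flag23_def using XY dim_span2[OF li2_uV] dim_span3[OF li3_B1]
    by (simp add: Xf_def Yf_def)
  have X0: "0 \<in> Xf t" and Y0: "0 \<in> Yf t" unfolding Xf_def Yf_def by (auto intro: vec.span_zero)
  have u0: "uv 1 t \<noteq> 0" proof assume "uv 1 t = 0" then have "uv 1 t $ 4 = 0" by simp then show False by (simp add: uv_c) qed
  have V0: "Vv 1 t \<noteq> 0"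
  proof
    assume "Vv 1 t = 0"
    then have "0 *s uv 1 t + 1 *s Vv 1 t = 0" by simp
    from li2_uV[of t, unfolded li2_def, rule_format, OF this] show False by simp
  qed
  have W0: "Wv 1 t \<noteq> 0"
  proof
    assume "Wv 1 t = 0"
    then have "nW1 1 t *s bv 1 t + nW2 1 t *s cv 1 t + nW3 1 t *s uv 1 t = 0" unfolding Wv_def by simp
    then have "nW1 1 t = 0" "nW2 1 t = 0" "nW3 1 t = 0" using li3_B1 unfolding li3_def by blast+
    then have "(1::complex) = 0 \<and> t = 0" by (rule BZ_nW)
    then show False by simp
  qed
  have WX: "Wv 1 t \<in> Xf t" unfolding W_span[OF q] Xf_def span2 by blast
  have b0: "bv 1 t \<noteq> 0" proof assume "bv 1 t = 0" then have "bv 1 t $ 4 = 0" by simp then show False by (simp add: bv_c) qed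
  have c0: "cv 1 t \<noteq> 0" proof assume "cv 1 t = 0" then have "cv 1 t $ 4 = 0" by simp then show False by (simp add: cv_c) qed
  have m1: "meets (Xf t) (K 2 4)" using meets_iff[OF X0 zero_K] uX uv_K u0 by blast
  have m2: "meets (Xf t) (K 3 3)" using meets_iff[OF X0 zero_K] VX Vv_K V0 by blast
  have m3: "meets (Xf t) (K 3 (-1))" using meets_iff[OF X0 zero_K] WX Wv_K W0 by blast
  have m4: "meets (Yf t) (K 2 1)" using meets_iff[OF Y0 zero_K] bY bv_K b0 by blast
  have m5: "meets (Yf t) (K 2 (-5))" using meets_iff[OF Y0 zero_K] cY cv_K c0 by blast
  define y1 where "y1 = cv 1 t - (cv 1 t $ 4) *s bv 1 t"
  define y2 where "y2 = uv 1 t - (uv 1 t $ 4) *s bv 1 t"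
  have y1Y: "y1 \<in> Yf t" unfolding y1_def Yf_def by (intro vec.span_diff vec.span_scale vec.span_base) auto
  have y2Y: "y2 \<in> Yf t" unfolding y2_def Yf_def by (intro vec.span_diff vec.span_scale vec.span_base) auto
  have y1A: "y1 \<in> K 3 0" unfolding K3_char f1_def f2_def y1_def by (simp add: bv_c cv_c)
  have y2A: "y2 \<in> K 3 0" unfolding K3_char f1_def f2_def y2_def by (simp add: bv_c uv_c)
  have "li2 y1 y2" unfolding li2_def
  proof (intro allI impI)
    fix c d assume eq: "c *s y1 + d *s y2 = 0"
    have "(- (c * cv 1 t $ 4 + d * uv 1 t $ 4)) *s bv 1 t + c *s cv 1 t + d *s uv 1 t = c *s y1 + d *s y2"
      unfolding y1_def y2_def by (rule vec5_eqI; simp only: vector_add_component vector_smult_component vector_minus_component; algebra)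
    then have "(- (c * cv 1 t $ 4 + d * uv 1 t $ 4)) *s bv 1 t + c *s cv 1 t + d *s uv 1 t = 0" using eq by simp
    then show "c = 0 \<and> d = 0" using li3_B1 unfolding li3_def by blast
  qed
  then have dA: "vec.dim (Yf t \<inter> K 3 0) \<ge> 2" using dim_ge2[of y1 "Yf t \<inter> K 3 0" y2] y1Y y2Y y1A y2A by blast
  show ?thesis using fl m1 m2 m3 m4 m5 dA by blast
qed

lemma Yf_inj: "Yf t = Yf t' \<Longrightarrow> t = t'"
proof -
  assume e: "Yf t = Yf t'"
  have "bv 1 t \<in> Yf t'" using e unfolding Yf_def by (auto intro: vec.span_base)
  then have "bv 1 t $ 5 = t' * bv 1 t $ 4" by (rule hyp_Y)
  then show ?thesis by (simp add: bv_c)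
qed

lemma real_flag:
  assumes "t \<in> \<real>"
  shows "real_subspace (Xf t) \<and> real_subspace (Yf t)"
proof -
  have R: "\<forall>j. Im (v $ j) = 0" if "v \<in> {bv 1 t, cv 1 t, uv 1 t, Vv 1 t}" for v
  proof
    fix j :: 5
    have "v $ j \<in> \<real>"
      using that exhaust_5[of j] assms
      by (auto simp: bv_c cv_c uv_c Vv_c)
    then show "Im (v $ j) = 0" by (simp add: complex_is_Real_iff)
  qed
  have "real_subspace (Xf t)" unfolding real_subspace_def Xf_def
    by (rule exI[of _ "{uv 1 t, Vv 1 t}"]) (use R in auto)
  moreover have "real_subspace (Yf t)" unfolding real_subspace_def Yf_def
    by (rule exI[of _ "{bv 1 t, cv 1 t, uv 1 t}"]) (use R in auto)
  ultimately show ?thesis ..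
qed

lemma nonreal_flag:
  assumes "t \<notin> \<real>"
  shows "\<not> real_subspace (Yf t)"
proof
  assume "real_subspace (Yf t)"
  then obtain S where S: "\<forall>v\<in>S. \<forall>j. Im (v $ j) = 0" and YS: "Yf t = vec.span S"
    unfolding real_subspace_def by blast
  have "bv 1 t \<in> vec.span S" using YS unfolding Yf_def by (metis insertI1 vec.span_base)
  then have "vcnj (bv 1 t) \<in> vec.span S" using cnj_span S by blast
  then have "vcnj (bv 1 t) $ 5 = t * vcnj (bv 1 t) $ 4" using hyp_Y YS by blast
  then have "cnj t = t" by (simp add: bv_c)
  then have "t \<in> \<real>" using Reals_cnj_iff by blast
  then show False using assms by blast
qed

definition qr :: "real \<Rightarrow> real" where "qr x = 3840 - 2464 * x - 201 * x^2 + 54 * x^3 + 31 * x^4"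

lemma Qt_of_real: "Qt (complex_of_real x) = complex_of_real (qr x)"
  unfolding Qt_def qr_def by simp

lemma qr_cont: "continuous_on S qr"
  unfolding qr_def by (intro continuous_intros)

lemma root1: "\<exists>r. 3/2 \<le> r \<and> r \<le> 8/5 \<and> qr r = 0"
proof (rule IVT2'[of qr])
  show "qr (8/5) \<le> 0" by (simp add: qr_def eval_nat_numeral)
  show "0 \<le> qr (3/2)" by (simp add: qr_def eval_nat_numeral)
qed (auto intro: qr_cont)

lemma root2: "\<exists>r. 7/2 \<le> r \<and> r \<le> 4 \<and> qr r = 0"
proof (rule IVT'[of qr])
  show "qr (7/2) \<le> 0" by (simp add: qr_def eval_nat_numeral)
  show "0 \<le> qr 4" by (simp add: qr_def eval_nat_numeral)
qed (auto intro: qr_cont)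

lemma quad_disc:
  fixes r1 r2 :: real
  assumes "3/2 \<le> r1" "r1 \<le> 8/5" "7/2 \<le> r2" "r2 \<le> 4"
  shows "124 * (- 201 + 54 * r1 + 31 * r1 * r1 + r2 * (54 + 31 * r1 + 31 * r2)) - (54 + 31 * (r1 + r2)) * (54 + 31 * (r1 + r2)) > 0"
proof -
  have a1: "3/2 * (3/2) \<le> r1 * r1" using assms by (intro mult_mono) auto
  have a2: "3/2 * (7/2) \<le> r1 * r2" using assms by (intro mult_mono) auto
  have a3: "7/2 * (7/2) \<le> r2 * r2" using assms by (intro mult_mono) auto
  have B0: "0 \<le> 54 + 31 * (r1 + r2)" using assms by simp
  have B1: "54 + 31 * (r1 + r2) \<le> 1138/5" using assms by simp
  have a4: "(54 + 31 * (r1 + r2)) * (54 + 31 * (r1 + r2)) \<le> 1138/5 * (1138/5)"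
    using B0 B1 by (intro mult_mono) auto
  have e: "124 * (- 201 + 54 * r1 + 31 * r1 * r1 + r2 * (54 + 31 * r1 + 31 * r2)) - (54 + 31 * (r1 + r2)) * (54 + 31 * (r1 + r2))
     = 124 * (- 201 + 54 * r1 + 54 * r2) + 3844 * (r1 * r1) + 3844 * (r1 * r2) + 3844 * (r2 * r2) - (54 + 31 * (r1 + r2)) * (54 + 31 * (r1 + r2))"
    by algebra
  have lin: "\<And>x11 x12 x22 BB. (x11::real) \<ge> 3/2 * (3/2) \<Longrightarrow> x12 \<ge> 3/2 * (7/2) \<Longrightarrow> x22 \<ge> 7/2 * (7/2) \<Longrightarrow> BB \<le> 1138/5 * (1138/5) \<Longrightarrow>
     0 < 124 * (- 201 + 54 * r1 + 54 * r2) + 3844 * x11 + 3844 * x12 + 3844 * x22 - BB"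
    using assms by (simp add: algebra_simps; linarith)
  show ?thesis unfolding e by (rule lin[OF a1 a2 a3 a4])
qed

lemma Qt_factor:
  fixes t R1 R2 :: complex
  shows "Qt t = (t - R1) * (t - R2) * (31 * t^2 + (54 + 31 * (R1 + R2)) * t + (- 201 + 54 * R1 + 31 * R1 * R1 + R2 * (54 + 31 * R1 + 31 * R2)))
     + (t - R1) * (31 * R2^3 + (54 + 31 * R1) * R2^2 + (- 201 + 54 * R1 + 31 * R1^2) * R2 + (- 2464 - 201 * R1 + 54 * R1^2 + 31 * R1^3)) + Qt R1"
  unfolding Qt_def by algebra

lemma P1_diff:
  fixes R1 R2 :: complex
  shows "(R2 - R1) * (31 * R2^3 + (54 + 31 * R1) * R2^2 + (- 201 + 54 * R1 + 31 * R1^2) * R2 + (- 2464 - 201 * R1 + 54 * R1^2 + 31 * R1^3)) = Qt R2 - Qt R1"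
  unfolding Qt_def by algebra

lemma quad_factor:
  fixes t B C s :: complex
  assumes "s^2 = 124 * C - B^2"
  shows "31 * t^2 + B * t + C = 31 * (t - (- B + \<i> * s) / 62) * (t - (- B - \<i> * s) / 62)"
proof -
  have "31 * (t - (- B + \<i> * s) / 62) * (t - (- B - \<i> * s) / 62) = 31 * t^2 + B * t + 31 * (B^2 - \<i>^2 * s^2) / 3844"
    by (simp add: field_simps power2_eq_square)
  also have "\<dots> = 31 * t^2 + B * t + C" using assms by (simp add: field_simps)
  finally show ?thesis by simp
qed

lemma roots:
  "\<exists>z1 z2 z3 z4. {t. Qt t = 0} = {z1, z2, z3, z4} \<and> z1 \<in> \<real> \<and> z2 \<in> \<real> \<and> z3 \<notin> \<real> \<and> z4 \<notin> \<real>
     \<and> z1 \<noteq> z2 \<and> z3 \<noteq> z4"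
proof -
  obtain r1 where r1: "3/2 \<le> r1" "r1 \<le> 8/5" "qr r1 = 0" using root1 by blast
  obtain r2 where r2: "7/2 \<le> r2" "r2 \<le> 4" "qr r2 = 0" using root2 by blast
  define R1 where "R1 = complex_of_real r1"
  define R2 where "R2 = complex_of_real r2"
  have Q1: "Qt R1 = 0" unfolding R1_def Qt_of_real r1 by simp
  have Q2: "Qt R2 = 0" unfolding R2_def Qt_of_real r2 by simp
  have R12: "R1 \<noteq> R2" unfolding R1_def R2_def using r1 r2 by simp
  have P1z: "31 * R2^3 + (54 + 31 * R1) * R2^2 + (- 201 + 54 * R1 + 31 * R1^2) * R2 + (- 2464 - 201 * R1 + 54 * R1^2 + 31 * R1^3) = 0"
    using P1_diff[of R2 R1] Q1 Q2 R12 by simp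
  define Br where "Br = 54 + 31 * (r1 + r2)"
  define Cr where "Cr = - 201 + 54 * r1 + 31 * r1 * r1 + r2 * (54 + 31 * r1 + 31 * r2)"
  define Dr where "Dr = 124 * Cr - Br * Br"
  have D0: "Dr > 0" unfolding Dr_def Br_def Cr_def using quad_disc r1 r2 by blast
  define s where "s = complex_of_real (sqrt Dr)"
  have s2: "s^2 = 124 * complex_of_real Cr - (complex_of_real Br)^2"
  proof -
    have "s^2 = complex_of_real ((sqrt Dr)^2)" unfolding s_def by simp
    also have "\<dots> = complex_of_real Dr" using D0 by simp
    finally show ?thesis unfolding Dr_def by (simp add: power2_eq_square)
  qed
  define z3 where "z3 = (- complex_of_real Br + \<i> * s) / 62"
  define z4 where "z4 = (- complex_of_real Br - \<i> * s) / 62"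
  have BC: "54 + 31 * (R1 + R2) = complex_of_real Br" "- 201 + 54 * R1 + 31 * R1 * R1 + R2 * (54 + 31 * R1 + 31 * R2) = complex_of_real Cr"
    unfolding R1_def R2_def Br_def Cr_def by simp_all
  have fac: "Qt t = (t - R1) * (t - R2) * (31 * ((t - z3) * (t - z4)))" for t
  proof -
    have "Qt t = (t - R1) * (t - R2) * (31 * t^2 + complex_of_real Br * t + complex_of_real Cr)"
      using Qt_factor[of t R1 R2] Q1 P1z unfolding BC by simp
    also have "31 * t^2 + complex_of_real Br * t + complex_of_real Cr = 31 * (t - z3) * (t - z4)"
      unfolding z3_def z4_def by (rule quad_factor[OF s2])
    finally show ?thesis by (simp add: mult.assoc)
  qed
  have roots: "{t. Qt t = 0} = {R1, R2, z3, z4}"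
    unfolding fac by auto
  have sp: "sqrt Dr > 0" using D0 by simp
  have Im3: "Im z3 = sqrt Dr / 62" unfolding z3_def s_def by simp
  have Im4: "Im z4 = - sqrt Dr / 62" unfolding z4_def s_def by simp
  have z3r: "z3 \<notin> \<real>" using Im3 sp complex_is_Real_iff by force
  have z4r: "z4 \<notin> \<real>" using Im4 sp complex_is_Real_iff by force
  have z34: "z3 \<noteq> z4" using Im3 Im4 sp by force
  show ?thesis
    by (rule exI[of _ R1], rule exI[of _ R2], rule exI[of _ z3], rule exI[of _ z4])
      (use roots z3r z4r z34 R12 in \<open>auto simp: R1_def R2_def\<close>)
qed

theorem mainTheorem16:
  defines "sols \<equiv> {(X, Y). flag23 X Y
      \<and> meets X (K 2 4) \<and> meets X (K 3 3) \<and> meets X (K 3 (-1))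
      \<and> vec.dim (Y \<inter> K 3 0) \<ge> 2
      \<and> meets Y (K 2 1) \<and> meets Y (K 2 (-5))}"
  shows "card sols = 4
    \<and> card {(X, Y) \<in> sols. real_subspace X \<and> real_subspace Y} = 2
    \<and> card {(X, Y) \<in> sols. \<not> (real_subspace X \<and> real_subspace Y)} = 2"
proof -
  define F where "F = (\<lambda>t. (Xf t, Yf t))"
  define R where "R = {t. Qt t = 0}"
  have solsR: "sols = F ` R"
  proof
    show "sols \<subseteq> F ` R"
    proof
      fix p assume "p \<in> sols"
      then obtain X Y where p: "p = (X, Y)" and h: "flag23 X Y" "meets X (K 2 4)" "meets X (K 3 3)" "meets X (K 3 (-1))"
        "vec.dim (Y \<inter> K 3 0) \<ge> 2" "meets Y (K 2 1)" "meets Y (K 2 (-5))"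
        unfolding sols_def by blast
      obtain t where "Qt t = 0" "X = vec.span {uv 1 t, Vv 1 t}" "Y = vec.span {bv 1 t, cv 1 t, uv 1 t}"
        using forward[OF h] by blast
      then show "p \<in> F ` R" unfolding p F_def R_def Xf_def Yf_def by blast
    qed
    show "F ` R \<subseteq> sols"
    proof
      fix p assume "p \<in> F ` R"
      then obtain t where t: "Qt t = 0" "p = (Xf t, Yf t)" unfolding F_def R_def by blast
      then show "p \<in> sols" using converse[OF t(1)] unfolding sols_def by simp
    qed
  qed
  have inj: "inj_on F R" unfolding inj_on_def F_def using Yf_inj by blast
  obtain z1 z2 z3 z4 where R4: "R = {z1, z2, z3, z4}" and z: "z1 \<in> \<real>" "z2 \<in> \<real>" "z3 \<notin> \<real>" "z4 \<notin> \<real>" "z1 \<noteq> z2" "z3 \<noteq> z4"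
    using roots unfolding R_def by blast
  have dist: "z1 \<noteq> z3" "z1 \<noteq> z4" "z2 \<noteq> z3" "z2 \<noteq> z4" using z by auto
  have cR: "card R = 4" unfolding R4 using z dist by simp
  have c1: "card sols = 4" unfolding solsR using card_image[OF inj] cR by simp
  have realset: "{(X, Y) \<in> sols. real_subspace X \<and> real_subspace Y} = F ` {z1, z2}"
  proof
    show "{(X, Y) \<in> sols. real_subspace X \<and> real_subspace Y} \<subseteq> F ` {z1, z2}"
    proof
      fix p assume "p \<in> {(X, Y) \<in> sols. real_subspace X \<and> real_subspace Y}"
      then obtain t where t: "t \<in> R" "p = F t" and rr: "real_subspace (Xf t) \<and> real_subspace (Yf t)"
        unfolding solsR F_def by auto
      have "t \<in> \<real>" using nonreal_flag rr by blast
      then have "t \<in> {z1, z2}" using t(1) z unfolding R4 by auto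
      then show "p \<in> F ` {z1, z2}" using t by blast
    qed
    show "F ` {z1, z2} \<subseteq> {(X, Y) \<in> sols. real_subspace X \<and> real_subspace Y}"
    proof
      fix p assume "p \<in> F ` {z1, z2}"
      then obtain t where t: "t \<in> {z1, z2}" "p = F t" by blast
      have "t \<in> R" using t(1) unfolding R4 by auto
      moreover have "real_subspace (Xf t) \<and> real_subspace (Yf t)" using real_flag t(1) z by auto
      ultimately show "p \<in> {(X, Y) \<in> sols. real_subspace X \<and> real_subspace Y}"
        unfolding solsR using t(2) unfolding F_def by auto
    qed
  qed
  have nonrealset: "{(X, Y) \<in> sols. \<not> (real_subspace X \<and> real_subspace Y)} = F ` {z3, z4}"
  proof
    show "{(X, Y) \<in> sols. \<not> (real_subspace X \<and> real_subspace Y)} \<subseteq> F ` {z3, z4}"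
    proof
      fix p assume "p \<in> {(X, Y) \<in> sols. \<not> (real_subspace X \<and> real_subspace Y)}"
      then obtain t where t: "t \<in> R" "p = F t" and rr: "\<not> (real_subspace (Xf t) \<and> real_subspace (Yf t))"
        unfolding solsR F_def by auto
      have "t \<notin> \<real>" using real_flag rr by blast
      then have "t \<in> {z3, z4}" using t(1) z unfolding R4 by auto
      then show "p \<in> F ` {z3, z4}" using t by blast
    qed
    show "F ` {z3, z4} \<subseteq> {(X, Y) \<in> sols. \<not> (real_subspace X \<and> real_subspace Y)}"
    proof
      fix p assume "p \<in> F ` {z3, z4}"
      then obtain t where t: "t \<in> {z3, z4}" "p = F t" by blast
      have "t \<in> R" using t(1) unfolding R4 by auto
      moreover have "\<not> real_subspace (Yf t)" using nonreal_flag t(1) z by auto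
      ultimately show "p \<in> {(X, Y) \<in> sols. \<not> (real_subspace X \<and> real_subspace Y)}"
        unfolding solsR using t(2) unfolding F_def by auto
    qed
  qed
  have sub1: "{z1, z2} \<subseteq> R" and sub2: "{z3, z4} \<subseteq> R" unfolding R4 by auto
  have c2: "card {(X, Y) \<in> sols. real_subspace X \<and> real_subspace Y} = 2"
    unfolding realset using card_image[OF inj_on_subset[OF inj sub1]] z by simp
  have c3: "card {(X, Y) \<in> sols. \<not> (real_subspace X \<and> real_subspace Y)} = 2"
    unfolding nonrealset using card_image[OF inj_on_subset[OF inj sub2]] z by simp
  show ?thesis using c1 c2 c3 by blast
qed

end
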